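(* For a mutually orthogonal $d$-dimensional pure-state ensemble $\Omega=\{(1/k,|\psi_i\rangle)\}_{i=0}^{k-1}$ with $k<d$, a necessary condition for $\Omega$ to saturate $\mathbf{C}_{\mathrm{MIO}}(\Omega)+\mathbf{S}(\Omega)=\log_2 d$ is \[ C_{\max}(\hat\omega)+S(\hat\omega)=\log_2 d, \] where $\hat\omega=\frac1k\sum_{i=0}^{k-1}|\psi_i\rangle\langle\psi_i|$.
   Context: Incoherent states $\mathcal{I}$ are diagonal in the computational basis; MIO are channels mapping $\mathcal{I}$ into itself. $C_R(\rho)=\min\{s\ge0:(\rho+s\tau)/(1+s)\in\mathcal{I}\text{ for some state }\tau\}$ is the robustness of coherence and $C_{\max}(\rho)=\log_2(1+C_R(\rho))=\min_{\sigma\in\mathcal{I}}D_{\max}(\rho\|\sigma)$ is the max-relative entropy of coherence. $\mathbf{C}_{\mathrm{MIO}}(\Omega)=\log_2(1+\eta)$, $\eta=\max\sum_jp_jC_R(\sigma_j)$ over MIO channels $\mathcal{N}_{A\to BA'}$ ($\dim B=k$, $A'\cong A$) with $\sigma_j=\mathrm{tr}_B[\mathcal{N}(\rho_j)]$ and $\sum_jp_j\mathrm{tr}[\mathcal{N}(\rho_j)(|j\rangle\langle j|_B\otimes I_{A'})]=P_{\mathrm{suc}}(\Omega)$ (optimal POVM discrimination probability). $\mathbf{S}(\Omega)=S(\hat\omega)$, the von Neumann entropy of the average state. *)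

theory Defs
  imports "Jordan_Normal_Form.Matrix" "Jordan_Normal_Form.Char_Poly"
begin

definition tr :: "complex mat \<Rightarrow> complex" where
  "tr A = (\<Sum>i<dim_row A. A $$ (i,i))"

definition adj :: "complex mat \<Rightarrow> complex mat" where
  "adj A = mat (dim_col A) (dim_row A) (\<lambda>(i,j). cnj (A $$ (j,i)))"

definition psd :: "nat \<Rightarrow> complex mat \<Rightarrow> bool" where
  "psd n A \<longleftrightarrow> A \<in> carrier_mat n n \<and>
     (\<forall>v \<in> carrier_vec n. Im (map_vec cnj v \<bullet> (A *\<^sub>v v)) = 0 \<and>
                           Re (map_vec cnj v \<bullet> (A *\<^sub>v v)) \<ge> 0)"

definition density :: "nat \<Rightarrow> complex mat \<Rightarrow> bool" where
  "density n \<rho> \<longleftrightarrow> psd n \<rho> \<and> tr \<rho> = 1"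

definition incoherent :: "nat \<Rightarrow> complex mat \<Rightarrow> bool" where
  "incoherent n \<rho> \<longleftrightarrow> density n \<rho> \<and> (\<forall>i<n. \<forall>j<n. i \<noteq> j \<longrightarrow> \<rho> $$ (i,j) = 0)"

definition proj :: "complex vec \<Rightarrow> complex mat" where
  "proj \<psi> = mat (dim_vec \<psi>) (dim_vec \<psi>) (\<lambda>(i,j). \<psi> $ i * cnj (\<psi> $ j))"

definition kraus_map :: "nat \<Rightarrow> complex mat list \<Rightarrow> complex mat \<Rightarrow> complex mat" where
  "kraus_map n Ks \<rho> = foldr (\<lambda>K acc. K * \<rho> * adj K + acc) Ks (0\<^sub>m n n)"

definition channel :: "nat \<Rightarrow> nat \<Rightarrow> (complex mat \<Rightarrow> complex mat) \<Rightarrow> bool" where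
  "channel m n N \<longleftrightarrow> (\<exists>Ks. Ks \<noteq> [] \<and> (\<forall>K \<in> set Ks. K \<in> carrier_mat n m) \<and>
       foldr (\<lambda>K acc. adj K * K + acc) Ks (0\<^sub>m m m) = 1\<^sub>m m \<and>
       (\<forall>\<rho> \<in> carrier_mat m m. N \<rho> = kraus_map n Ks \<rho>))"

definition MIO :: "nat \<Rightarrow> nat \<Rightarrow> (complex mat \<Rightarrow> complex mat) \<Rightarrow> bool" where
  "MIO m n N \<longleftrightarrow> channel m n N \<and> (\<forall>\<rho>. incoherent m \<rho> \<longrightarrow> incoherent n (N \<rho>))"

definition robustness :: "nat \<Rightarrow> complex mat \<Rightarrow> real" where
  "robustness n \<rho> = Inf {s. s \<ge> 0 \<and> (\<exists>\<tau>. density n \<tau> \<and>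
        incoherent n ((1 / (1 + complex_of_real s)) \<cdot>\<^sub>m (\<rho> + complex_of_real s \<cdot>\<^sub>m \<tau>)))}"

definition C_max :: "nat \<Rightarrow> complex mat \<Rightarrow> real" where
  "C_max n \<rho> = log 2 (1 + robustness n \<rho>)"

definition eigvals :: "nat \<Rightarrow> complex mat \<Rightarrow> complex list" where
  "eigvals n A = (SOME as. char_poly A = (\<Prod>a \<leftarrow> as. [:- a, 1:]) \<and> length as = n)"

definition vN_entropy :: "nat \<Rightarrow> complex mat \<Rightarrow> real" where
  "vN_entropy n \<rho> = sum_list (map (\<lambda>a. if Re a = 0 then 0 else - Re a * log 2 (Re a)) (eigvals n \<rho>))"

text \<open>An ensemble is given by a probability vector p and states rho, indexed by j < k,
  acting on dimension d.\<close>

definition avg_state :: "nat \<Rightarrow> nat \<Rightarrow> (nat \<Rightarrow> real) \<Rightarrow> (nat \<Rightarrow> complex mat) \<Rightarrow> complex mat" where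
  "avg_state k d p \<rho> = mat d d (\<lambda>(a,b). \<Sum>j<k. complex_of_real (p j) * \<rho> j $$ (a,b))"

definition POVM :: "nat \<Rightarrow> nat \<Rightarrow> (nat \<Rightarrow> complex mat) \<Rightarrow> bool" where
  "POVM k d M \<longleftrightarrow> (\<forall>j<k. psd d (M j)) \<and> mat d d (\<lambda>(a,b). \<Sum>j<k. M j $$ (a,b)) = 1\<^sub>m d"

definition P_suc :: "nat \<Rightarrow> nat \<Rightarrow> (nat \<Rightarrow> real) \<Rightarrow> (nat \<Rightarrow> complex mat) \<Rightarrow> real" where
  "P_suc k d p \<rho> = Sup {(\<Sum>j<k. p j * Re (tr (M j * \<rho> j))) | M. POVM k d M}"

text \<open>Output of N : A -> B A' lives on dimension k*d, with the B index (dimension k) as the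
  leading tensor factor: basis |j>_B |a>_{A'} has index j*d + a.\<close>

definition ptrace_B :: "nat \<Rightarrow> nat \<Rightarrow> complex mat \<Rightarrow> complex mat" where
  "ptrace_B k d X = mat d d (\<lambda>(a,b). \<Sum>j<k. X $$ (j*d + a, j*d + b))"

text \<open>tr[X (|j><j|_B tensor I_{A'})].\<close>
definition tr_proj_B :: "nat \<Rightarrow> nat \<Rightarrow> complex mat \<Rightarrow> complex" where
  "tr_proj_B d j X = (\<Sum>a<d. X $$ (j*d + a, j*d + a))"

definition eta_MIO :: "nat \<Rightarrow> nat \<Rightarrow> (nat \<Rightarrow> real) \<Rightarrow> (nat \<Rightarrow> complex mat) \<Rightarrow> real" where
  "eta_MIO k d p \<rho> = Sup {(\<Sum>j<k. p j * robustness d (ptrace_B k d (N (\<rho> j)))) | N.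
       MIO d (k*d) N \<and>
       (\<Sum>j<k. p j * Re (tr_proj_B d j (N (\<rho> j)))) = P_suc k d p \<rho>}"

definition C_MIO_ens :: "nat \<Rightarrow> nat \<Rightarrow> (nat \<Rightarrow> real) \<Rightarrow> (nat \<Rightarrow> complex mat) \<Rightarrow> real" where
  "C_MIO_ens k d p \<rho> = log 2 (1 + eta_MIO k d p \<rho>)"

definition S_ens :: "nat \<Rightarrow> nat \<Rightarrow> (nat \<Rightarrow> real) \<Rightarrow> (nat \<Rightarrow> complex mat) \<Rightarrow> real" where
  "S_ens k d p \<rho> = vN_entropy d (avg_state k d p \<rho>)"

end

theory Submission
  imports Defs "Jordan_Normal_Form.Schur_Decomposition"
begin


definition qf :: "nat \<Rightarrow> complex mat \<Rightarrow> complex vec \<Rightarrow> complex" where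
  "qf n X v = (\<Sum>a<n. \<Sum>b<n. cnj (v$a) * X$$(a,b) * v$b)"

lemma qf_eq: assumes "X \<in> carrier_mat n n" "v \<in> carrier_vec n"
  shows "map_vec cnj v \<bullet> (X *\<^sub>v v) = qf n X v"
  using assms unfolding qf_def scalar_prod_def
  by (auto simp: sum_distrib_left mult.assoc atLeast0LessThan scalar_prod_def intro!: sum.cong)

lemma psd_iff: "psd n X \<longleftrightarrow> X \<in> carrier_mat n n \<and> (\<forall>v\<in>carrier_vec n. 0 \<le> qf n X v)"
  by (auto simp: psd_def qf_eq less_eq_complex_def)

lemma cnj_mult_self_nonneg: "0 \<le> cnj z * (z::complex)"
  by (simp add: less_eq_complex_def)

lemma psd_gram:
  fixes Y :: "'c \<Rightarrow> nat \<Rightarrow> complex"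
  assumes X: "X \<in> carrier_mat n n" and C: "finite C"
    and e: "\<And>a b. a<n \<Longrightarrow> b<n \<Longrightarrow> X$$(a,b) = (\<Sum>c\<in>C. cnj (Y c a) * Y c b)"
  shows "psd n X"
  unfolding psd_iff
proof (intro conjI X ballI)
  fix v :: "complex vec" assume v: "v \<in> carrier_vec n"
  have "qf n X v = (\<Sum>a<n. \<Sum>b<n. cnj (v$a) * (\<Sum>c\<in>C. cnj (Y c a) * Y c b) * v$b)"
    by (auto simp: qf_def e intro!: sum.cong)
  also have "\<dots> = (\<Sum>a<n. \<Sum>b<n. \<Sum>c\<in>C. (cnj (Y c a) * cnj (v$a)) * (Y c b * v$b))"
    by (simp add: sum_distrib_left sum_distrib_right mult_ac)
  also have "\<dots> = (\<Sum>c\<in>C. \<Sum>a<n. \<Sum>b<n. (cnj (Y c a) * cnj (v$a)) * (Y c b * v$b))"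
    by (simp only: sum.swap[where A="{..<n}" and B=C])
  also have "\<dots> = (\<Sum>c\<in>C. cnj (\<Sum>a<n. Y c a * v$a) * (\<Sum>b<n. Y c b * v$b))"
    by (simp add: sum_product cnj_sum)
  finally have eq: "qf n X v = (\<Sum>c\<in>C. cnj (\<Sum>a<n. Y c a * v$a) * (\<Sum>b<n. Y c b * v$b))" .
  show "0 \<le> qf n X v" unfolding eq by (intro sum_nonneg cnj_mult_self_nonneg)
qed

lemma sum_if2: "finite S \<Longrightarrow> a \<in> S \<Longrightarrow> b \<in> S \<Longrightarrow> a \<noteq> b \<Longrightarrow>
   (\<Sum>i\<in>S. if i = a then p else if i = b then q else 0) = p + (q::complex)"
proof -
  assume fin: "finite S" and ab: "a \<in> S" "b \<in> S" "a \<noteq> b"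
  have "(\<Sum>i\<in>S. if i = a then p else if i = b then q else 0) = (\<Sum>i\<in>S. (if i = a then p else 0) + (if i = b then q else 0))"
    using ab by (intro sum.cong) auto
  also have "\<dots> = p + q" using fin ab by (simp add: sum.distrib)
  finally show ?thesis .
qed

lemma qf_two: assumes "a<n" "b<n" "a\<noteq>b"
  shows "qf n X (vec n (\<lambda>i. if i = a then \<alpha> else if i = b then \<beta> else 0)) =
     cnj \<alpha> * X$$(a,a) * \<alpha> + cnj \<alpha> * X$$(a,b) * \<beta> + (cnj \<beta> * X$$(b,a) * \<alpha> + cnj \<beta> * X$$(b,b) * \<beta>)"
proof -
  have "qf n X (vec n (\<lambda>i. if i = a then \<alpha> else if i = b then \<beta> else 0)) =
    (\<Sum>i<n. if i = a then (\<Sum>j<n. if j = a then cnj \<alpha> * X$$(a,a) * \<alpha> else if j = b then cnj \<alpha> * X$$(a,b) * \<beta> else 0)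
      else if i = b then (\<Sum>j<n. if j = a then cnj \<beta> * X$$(b,a) * \<alpha> else if j = b then cnj \<beta> * X$$(b,b) * \<beta> else 0) else 0)"
    using assms by (auto simp: qf_def intro!: sum.cong)
  also have "\<dots> = cnj \<alpha> * X$$(a,a) * \<alpha> + cnj \<alpha> * X$$(a,b) * \<beta> + (cnj \<beta> * X$$(b,a) * \<alpha> + cnj \<beta> * X$$(b,b) * \<beta>)"
    using assms by (simp add: sum_if2)
  finally show ?thesis .
qed

lemma qf_one: assumes a: "a<n"
  shows "qf n X (vec n (\<lambda>i. if i = a then 1 else 0)) = X$$(a,a)"
proof -
  let ?v = "vec n (\<lambda>i. if i = a then 1 else (0::complex))"
  have inner: "(\<Sum>j<n. cnj (?v$i) * X$$(i,j) * ?v$j) = (if i = a then X$$(a,a) else 0)" if i: "i<n" for i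
  proof -
    have "(\<Sum>j<n. cnj (?v$i) * X$$(i,j) * ?v$j) = (\<Sum>j<n. if j = a then cnj (?v$i) * X$$(i,a) else 0)"
      by (intro sum.cong) auto
    also have "\<dots> = cnj (?v$i) * X$$(i,a)" using a by simp
    finally show ?thesis using i by auto
  qed
  have "qf n X ?v = (\<Sum>i<n. if i = a then X$$(a,a) else 0)"
    unfolding qf_def by (rule sum.cong[OF refl], rule inner) simp
  also have "\<dots> = X$$(a,a)" using a by simp
  finally show ?thesis .
qed

lemma psd_diag: "psd n X \<Longrightarrow> a < n \<Longrightarrow> 0 \<le> X$$(a,a)"
  using qf_one[of a n X] unfolding psd_iff by (metis vec_carrier)

lemma lin_nonneg_zero: assumes h: "\<And>t::real. 0 \<le> A + complex_of_real t * B" shows "B = 0"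
proof -
  from h[of 0] have A: "Im A = 0" "Re A \<ge> 0" by (auto simp: less_eq_complex_def)
  from h[of 1] A have IB: "Im B = 0" by (auto simp: less_eq_complex_def)
  have "Re B = 0"
  proof (rule ccontr)
    assume nz: "Re B \<noteq> 0"
    define t where "t = - (Re A + 1) / Re B"
    from h[of t] have "0 \<le> Re A + t * Re B" by (auto simp: less_eq_complex_def)
    also have "t * Re B = - (Re A + 1)" using nz by (simp add: t_def)
    finally show False by simp
  qed
  with IB show ?thesis by (simp add: complex_eq_iff)
qed

lemma psd_zero_diag: assumes X: "psd n X" and a: "a<n" and b: "b<n" and z: "X$$(a,a) = 0"
  shows "X$$(a,b) = 0 \<and> X$$(b,a) = 0"
proof (cases "a = b")
  case True then show ?thesis using z by simp
next
  case False
  have key: "0 \<le> cnj c * X$$(a,b) + X$$(b,a) * c + X$$(b,b)" for c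
  proof -
    have "0 \<le> qf n X (vec n (\<lambda>i. if i = a then c else if i = b then 1 else 0))"
      using X unfolding psd_iff by (metis vec_carrier)
    also have "\<dots> = cnj c * X$$(a,b) + X$$(b,a) * c + X$$(b,b)"
      using qf_two[OF a b False, of X c 1] z by simp
    finally show ?thesis .
  qed
  have s: "X$$(a,b) + X$$(b,a) = 0"
  proof (rule lin_nonneg_zero[of "X$$(b,b)"])
    fix t :: real
    show "0 \<le> X$$(b,b) + complex_of_real t * (X$$(a,b) + X$$(b,a))"
      using key[of "complex_of_real t"] by (simp add: algebra_simps)
  qed
  have d: "\<i> * (X$$(b,a) - X$$(a,b)) = 0"
  proof (rule lin_nonneg_zero[of "X$$(b,b)"])
    fix t :: real
    show "0 \<le> X$$(b,b) + complex_of_real t * (\<i> * (X$$(b,a) - X$$(a,b)))"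
      using key[of "\<i> * complex_of_real t"] by (simp add: algebra_simps)
  qed
  from s d show ?thesis by (auto simp: algebra_simps)
qed

lemma sum_inj_reindex:
  fixes f :: "nat \<Rightarrow> nat" and h :: "nat \<Rightarrow> 'z::comm_monoid_add"
  assumes "inj_on f {..<m}" "f ` {..<m} \<subseteq> {..<n}" "\<And>x. x<n \<Longrightarrow> x \<notin> f`{..<m} \<Longrightarrow> h x = 0"
  shows "(\<Sum>x<n. h x) = (\<Sum>a<m. h (f a))"
proof -
  have "(\<Sum>x<n. h x) = (\<Sum>x\<in>f`{..<m}. h x)"
    using assms by (intro sum.mono_neutral_right) auto
  also have "\<dots> = (\<Sum>a<m. h (f a))" using assms(1) by (simp add: sum.reindex)
  finally show ?thesis .
qed

lemma psd_sub:
  assumes X: "psd n X" and Y: "Y \<in> carrier_mat m m"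
    and f: "inj_on f {..<m}" "f ` {..<m} \<subseteq> {..<n}" and c: "0 \<le> c"
    and e: "\<And>a b. a<m \<Longrightarrow> b<m \<Longrightarrow> Y$$(a,b) = complex_of_real c * X$$(f a, f b)"
  shows "psd m Y"
  unfolding psd_iff
proof (intro conjI Y ballI)
  fix v :: "complex vec" assume v: "v \<in> carrier_vec m"
  define w where "w = vec n (\<lambda>x. if x \<in> f`{..<m} then v $ (the_inv_into {..<m} f x) else 0)"
  have wf: "w $ (f a) = v $ a" if "a < m" for a
    using that f unfolding w_def by (auto simp: the_inv_into_f_f)
  have w0: "w $ x = 0" if "x < n" "x \<notin> f`{..<m}" for x
    using that unfolding w_def by auto
  have inner: "(\<Sum>y<n. cnj (w$x) * X$$(x,y) * w$y) = (\<Sum>b<m. cnj (w$x) * X$$(x,f b) * v$b)" for x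
    by (subst sum_inj_reindex[OF f]) (auto simp: w0 wf)
  have "qf n X w = (\<Sum>x<n. \<Sum>b<m. cnj (w$x) * X$$(x,f b) * v$b)"
    unfolding qf_def inner ..
  also have "\<dots> = (\<Sum>a<m. \<Sum>b<m. cnj (w$(f a)) * X$$(f a,f b) * v$b)"
    by (subst sum_inj_reindex[OF f]) (auto simp: w0)
  also have "\<dots> = (\<Sum>a<m. \<Sum>b<m. cnj (v$a) * X$$(f a,f b) * v$b)"
    by (auto simp: wf intro!: sum.cong)
  finally have eq: "qf n X w = (\<Sum>a<m. \<Sum>b<m. cnj (v$a) * X$$(f a,f b) * v$b)" .
  have "0 \<le> qf n X w" using X unfolding psd_iff w_def by (metis vec_carrier)
  hence nn: "0 \<le> (\<Sum>a<m. \<Sum>b<m. cnj (v$a) * X$$(f a,f b) * v$b)" using eq by simp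
  have "qf m Y v = complex_of_real c * (\<Sum>a<m. \<Sum>b<m. cnj (v$a) * X$$(f a,f b) * v$b)"
    by (auto simp: qf_def e sum_distrib_left mult_ac intro!: sum.cong)
  also have "0 \<le> \<dots>" using nn c by (auto simp: less_eq_complex_def)
  finally show "0 \<le> qf m Y v" by simp
qed




lemma adj_carrier: "K \<in> carrier_mat n m \<Longrightarrow> adj K \<in> carrier_mat m n"
  by (simp add: adj_def)

lemma kraus_entry:
  assumes "\<forall>K\<in>set Ks. K \<in> carrier_mat n m" "\<rho> \<in> carrier_mat m m"
  shows "kraus_map n Ks \<rho> \<in> carrier_mat n n \<and> (\<forall>x<n. \<forall>y<n. kraus_map n Ks \<rho> $$ (x,y) =
     (\<Sum>K\<leftarrow>Ks. \<Sum>a<m. \<Sum>b<m. K$$(x,a) * \<rho>$$(a,b) * cnj (K$$(y,b))))"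
  using assms(1)
proof (induction Ks)
  case Nil
  then show ?case by (simp add: kraus_map_def)
next
  case (Cons K Ks)
  have K: "K \<in> carrier_mat n m" using Cons by simp
  have IH: "kraus_map n Ks \<rho> \<in> carrier_mat n n" "\<And>x y. x<n \<Longrightarrow> y<n \<Longrightarrow> kraus_map n Ks \<rho> $$ (x,y) =
     (\<Sum>K\<leftarrow>Ks. \<Sum>a<m. \<Sum>b<m. K$$(x,a) * \<rho>$$(a,b) * cnj (K$$(y,b)))" using Cons by auto
  have eq: "kraus_map n (K#Ks) \<rho> = K * \<rho> * adj K + kraus_map n Ks \<rho>"
    by (simp add: kraus_map_def)
  have c1: "K * \<rho> * adj K \<in> carrier_mat n n" using K assms(2) adj_carrier[OF K] by auto
  have e1: "(K * \<rho> * adj K) $$ (x,y) = (\<Sum>a<m. \<Sum>b<m. K$$(x,a) * \<rho>$$(a,b) * cnj (K$$(y,b)))"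
    if "x<n" "y<n" for x y
    using that K assms(2) adj_carrier[OF K]
    by (auto simp: scalar_prod_def adj_def sum_distrib_right atLeast0LessThan intro: sum.swap)
  show ?case unfolding eq using c1 IH e1 by auto
qed

lemma adjfold_entry:
  assumes "\<forall>K\<in>set Ks. K \<in> carrier_mat n m"
  shows "foldr (\<lambda>K acc. adj K * K + acc) Ks (0\<^sub>m m m) \<in> carrier_mat m m \<and> (\<forall>a<m. \<forall>b<m.
     foldr (\<lambda>K acc. adj K * K + acc) Ks (0\<^sub>m m m) $$ (a,b) = (\<Sum>K\<leftarrow>Ks. \<Sum>x<n. cnj (K$$(x,a)) * K$$(x,b)))"
  using assms
proof (induction Ks)
  case Nil
  then show ?case by simp
next
  case (Cons K Ks)
  have K: "K \<in> carrier_mat n m" using Cons by simp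
  have c1: "adj K * K \<in> carrier_mat m m" using K adj_carrier[OF K] by auto
  have e1: "(adj K * K) $$ (a,b) = (\<Sum>x<n. cnj (K$$(x,a)) * K$$(x,b))" if "a<m" "b<m" for a b
    using that K adj_carrier[OF K] by (auto simp: scalar_prod_def adj_def atLeast0LessThan)
  show ?case using c1 e1 Cons by auto
qed

lemma sum_list_map_nth: "(\<Sum>K\<leftarrow>Ks. f K) = (\<Sum>i<length Ks. f (Ks!i))"
  by (simp add: sum_list_sum_nth atLeast0LessThan)

lemma channel_facts:
  assumes "channel m n N"
  obtains r \<kappa> where "\<And>i. i<(r::nat) \<Longrightarrow> \<kappa> i \<in> carrier_mat n m"
    "\<And>\<rho>. \<rho> \<in> carrier_mat m m \<Longrightarrow> N \<rho> \<in> carrier_mat n n"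
    "\<And>\<rho> x y. \<rho> \<in> carrier_mat m m \<Longrightarrow> x<n \<Longrightarrow> y<n \<Longrightarrow> N \<rho> $$ (x,y) =
        (\<Sum>i<r. \<Sum>a<m. \<Sum>b<m. \<kappa> i $$ (x,a) * \<rho>$$(a,b) * cnj (\<kappa> i $$ (y,b)))"
    "\<And>a b. a<m \<Longrightarrow> b<m \<Longrightarrow> (\<Sum>i<r. \<Sum>x<n. cnj (\<kappa> i $$ (x,a)) * \<kappa> i $$ (x,b)) = (if a = b then 1 else 0)"
proof -
  from assms obtain Ks where Ks: "\<forall>K\<in>set Ks. K \<in> carrier_mat n m"
    "foldr (\<lambda>K acc. adj K * K + acc) Ks (0\<^sub>m m m) = 1\<^sub>m m"
    "\<forall>\<rho>\<in>carrier_mat m m. N \<rho> = kraus_map n Ks \<rho>"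
    unfolding channel_def by blast
  show ?thesis
  proof (rule that[of "length Ks" "\<lambda>i. Ks!i"])
    show "\<And>i. i < length Ks \<Longrightarrow> Ks ! i \<in> carrier_mat n m" using Ks(1) by auto
    show "\<And>\<rho>. \<rho> \<in> carrier_mat m m \<Longrightarrow> N \<rho> \<in> carrier_mat n n" using Ks(1,3) kraus_entry by auto
    show "\<rho> \<in> carrier_mat m m \<Longrightarrow> x<n \<Longrightarrow> y<n \<Longrightarrow> N \<rho> $$ (x,y) =
        (\<Sum>i<length Ks. \<Sum>a<m. \<Sum>b<m. (Ks!i) $$ (x,a) * \<rho>$$(a,b) * cnj ((Ks!i) $$ (y,b)))" for \<rho> x y
      using Ks(1,3) kraus_entry[of Ks n m \<rho>] by (simp add: sum_list_map_nth)
    show "a<m \<Longrightarrow> b<m \<Longrightarrow> (\<Sum>i<length Ks. \<Sum>x<n. cnj ((Ks!i) $$ (x,a)) * (Ks!i) $$ (x,b)) = (if a = b then 1 else 0)" for a b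
      using adjfold_entry[OF Ks(1)] Ks(2) by (simp add: sum_list_map_nth)
  qed
qed

locale kraus =
  fixes m n r :: nat and N :: "complex mat \<Rightarrow> complex mat" and \<kappa> :: "nat \<Rightarrow> complex mat"
  assumes car: "\<And>\<rho>. \<rho> \<in> carrier_mat m m \<Longrightarrow> N \<rho> \<in> carrier_mat n n"
    and ent: "\<And>\<rho> x y. \<rho> \<in> carrier_mat m m \<Longrightarrow> x<n \<Longrightarrow> y<n \<Longrightarrow> N \<rho> $$ (x,y) =
        (\<Sum>i<r. \<Sum>a<m. \<Sum>b<m. \<kappa> i $$ (x,a) * \<rho>$$(a,b) * cnj (\<kappa> i $$ (y,b)))"
    and tp: "\<And>a b. a<m \<Longrightarrow> b<m \<Longrightarrow> (\<Sum>i<r. \<Sum>x<n. cnj (\<kappa> i $$ (x,a)) * \<kappa> i $$ (x,b)) = (if a = b then 1 else 0)"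
begin

lemma ch_tr: assumes \<rho>: "\<rho> \<in> carrier_mat m m" shows "tr (N \<rho>) = tr \<rho>"
proof -
  have "tr (N \<rho>) = (\<Sum>x<n. \<Sum>i<r. \<Sum>a<m. \<Sum>b<m. \<rho>$$(a,b) * (cnj (\<kappa> i $$ (x,b)) * \<kappa> i $$ (x,a)))"
    using car[OF \<rho>] by (auto simp: tr_def ent[OF \<rho>] mult_ac intro!: sum.cong)
  also have "\<dots> = (\<Sum>a<m. \<Sum>b<m. \<Sum>i<r. \<Sum>x<n. \<rho>$$(a,b) * (cnj (\<kappa> i $$ (x,b)) * \<kappa> i $$ (x,a)))"
    by (simp only: sum.swap[where A="{..<n}" and B="{..<r}"] sum.swap[where A="{..<n}" and B="{..<m}"]
        sum.swap[where A="{..<r}" and B="{..<m}"])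
  also have "\<dots> = (\<Sum>a<m. \<Sum>b<m. \<rho>$$(a,b) * (\<Sum>i<r. \<Sum>x<n. cnj (\<kappa> i $$ (x,b)) * \<kappa> i $$ (x,a)))"
    by (simp add: sum_distrib_left)
  also have "\<dots> = (\<Sum>a<m. \<Sum>b<m. if b = a then \<rho>$$(a,b) else 0)"
    by (intro sum.cong refl) (simp add: tp)
  also have "\<dots> = tr \<rho>" using \<rho> by (simp add: tr_def)
  finally show ?thesis .
qed

lemma ch_psd: assumes \<rho>: "psd m \<rho>" shows "psd n (N \<rho>)"
proof -
  have \<rho>c: "\<rho> \<in> carrier_mat m m" using \<rho> by (simp add: psd_def)
  show ?thesis unfolding psd_iff
  proof (intro conjI car[OF \<rho>c] ballI)
    fix v :: "complex vec" assume v: "v \<in> carrier_vec n"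
    define w where "w i = vec m (\<lambda>a. \<Sum>x<n. cnj (\<kappa> i $$ (x,a)) * v$x)" for i
    have "qf n (N \<rho>) v = (\<Sum>x<n. \<Sum>y<n. \<Sum>i<r. \<Sum>a<m. \<Sum>b<m.
        (\<kappa> i $$ (x,a) * cnj (v$x)) * \<rho>$$(a,b) * (cnj (\<kappa> i $$ (y,b)) * v$y))"
      unfolding qf_def
      by (intro sum.cong refl) (simp add: ent[OF \<rho>c] sum_distrib_left sum_distrib_right mult_ac)
    also have "\<dots> = (\<Sum>i<r. \<Sum>a<m. \<Sum>b<m. \<Sum>x<n. \<Sum>y<n.
        (\<kappa> i $$ (x,a) * cnj (v$x)) * \<rho>$$(a,b) * (cnj (\<kappa> i $$ (y,b)) * v$y))"
      by (simp only: sum.swap[where A="{..<n}" and B="{..<r}"] sum.swap[where A="{..<n}" and B="{..<m}"])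
    also have "\<dots> = (\<Sum>i<r. qf m \<rho> (w i))"
      unfolding qf_def w_def
      by (intro sum.cong refl) (simp add: cnj_sum sum_distrib_left sum_distrib_right mult_ac)
    finally have eq: "qf n (N \<rho>) v = (\<Sum>i<r. qf m \<rho> (w i))" .
    show "0 \<le> qf n (N \<rho>) v" unfolding eq
      using \<rho> unfolding psd_iff w_def by (intro sum_nonneg) auto
  qed
qed

lemma ch_density: "density m \<rho> \<Longrightarrow> density n (N \<rho>)"
  using ch_psd ch_tr by (auto simp: density_def psd_def)

lemma ch_lin2: assumes A: "A \<in> carrier_mat m m" and B: "B \<in> carrier_mat m m" and C: "C \<in> carrier_mat m m"
  and e: "\<And>a b. a<m \<Longrightarrow> b<m \<Longrightarrow> C$$(a,b) = \<alpha> * A$$(a,b) + \<beta> * B$$(a,b)"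
  and xy: "x<n" "y<n"
  shows "N C $$ (x,y) = \<alpha> * N A $$ (x,y) + \<beta> * N B $$ (x,y)"
  using xy by (auto simp: ent[OF A] ent[OF B] ent[OF C] e sum_distrib_left algebra_simps sum.distrib
      intro!: sum.cong)

lemma ch_linsum: assumes A: "\<And>j. j<k \<Longrightarrow> A j \<in> carrier_mat m m" and C: "C \<in> carrier_mat m m"
  and e: "\<And>a b. a<m \<Longrightarrow> b<m \<Longrightarrow> C$$(a,b) = (\<Sum>j<k. c j * A j $$(a,b))"
  and xy: "x<n" "y<n"
  shows "N C $$ (x,y) = (\<Sum>j<k. c j * N (A j) $$ (x,y))"
proof -
  have "N C $$ (x,y) = (\<Sum>i<r. \<Sum>a<m. \<Sum>b<m. \<Sum>j<k. c j * (\<kappa> i $$ (x,a) * A j $$(a,b) * cnj (\<kappa> i $$ (y,b))))"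
    using xy by (auto simp: ent[OF C] e sum_distrib_left sum_distrib_right mult_ac intro!: sum.cong)
  also have "\<dots> = (\<Sum>j<k. \<Sum>i<r. \<Sum>a<m. \<Sum>b<m. c j * (\<kappa> i $$ (x,a) * A j $$(a,b) * cnj (\<kappa> i $$ (y,b))))"
    by (simp only: sum.swap[where A="{..<m}" and B="{..<k}"] sum.swap[where A="{..<r}" and B="{..<k}"])
  also have "\<dots> = (\<Sum>j<k. c j * N (A j) $$ (x,y))"
    using xy A by (auto simp: ent sum_distrib_left intro!: sum.cong)
  finally show ?thesis .
qed

end




lemma sum_blocks: "(\<Sum>x<k*d. f x) = (\<Sum>i<k. \<Sum>a<(d::nat). f (i*d+a))"
proof (induction k)
  case 0 then show ?case by simp
next
  case (Suc k)
  have "(\<Sum>x<Suc k*d. f x) = (\<Sum>x\<in>{0..<k*d}. f x) + (\<Sum>x\<in>{k*d..<k*d+d}. f x)"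
    using sum.atLeastLessThan_concat[of 0 "k*d" "k*d+d" f]
    by (simp add: atLeast0LessThan[symmetric] add.commute)
  also have "(\<Sum>x\<in>{k*d..<k*d+d}. f x) = (\<Sum>a<d. f (k*d+a))"
    using sum.shift_bounds_nat_ivl[of f "0" "k*d" d]
    by (simp add: atLeast0LessThan add.commute)
  finally show ?case using Suc by (simp add: atLeast0LessThan)
qed

lemma psd_diagonal: assumes X: "X \<in> carrier_mat n n"
  and off: "\<And>a b. a<n \<Longrightarrow> b<n \<Longrightarrow> a \<noteq> b \<Longrightarrow> X$$(a,b) = 0"
  and dg: "\<And>a. a<n \<Longrightarrow> 0 \<le> X$$(a,a)"
  shows "psd n X"
  unfolding psd_iff
proof (intro conjI X ballI)
  fix v :: "complex vec"
  have "qf n X v = (\<Sum>a<n. X$$(a,a) * (cnj (v$a) * v$a))"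
  proof -
    have "(\<Sum>b<n. cnj (v$a) * X$$(a,b) * v$b) = X$$(a,a) * (cnj (v$a) * v$a)" if a: "a<n" for a
    proof -
      have "(\<Sum>b<n. cnj (v$a) * X$$(a,b) * v$b) = (\<Sum>b<n. if b = a then cnj (v$a) * X$$(a,a) * v$a else 0)"
        using a off by (intro sum.cong) auto
      then show ?thesis using a by simp
    qed
    then show ?thesis unfolding qf_def by (intro sum.cong) auto
  qed
  also have "0 \<le> \<dots>" using dg by (intro sum_nonneg mult_nonneg_nonneg cnj_mult_self_nonneg) auto
  finally show "0 \<le> qf n X v" by simp
qed

lemma psd_add: assumes "psd n A" "psd n B" "C \<in> carrier_mat n n"
  "\<And>a b. a<n \<Longrightarrow> b<n \<Longrightarrow> C$$(a,b) = A$$(a,b) + B$$(a,b)"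
  shows "psd n C"
  unfolding psd_iff
proof (intro conjI assms(3) ballI)
  fix v :: "complex vec" assume v: "v \<in> carrier_vec n"
  have "qf n C v = qf n A v + qf n B v"
    by (auto simp: qf_def assms(4) algebra_simps sum.distrib intro!: sum.cong)
  also have "0 \<le> \<dots>" using assms(1,2) v unfolding psd_iff by (simp add: add_nonneg_nonneg)
  finally show "0 \<le> qf n C v" by simp
qed

lemma tr_comm: assumes "A \<in> carrier_mat n m" "B \<in> carrier_mat m n"
  shows "tr (A * B) = tr (B * A)"
proof -
  have "tr (A * B) = (\<Sum>i<n. \<Sum>j<m. A$$(i,j) * B$$(j,i))"
    using assms by (auto simp: tr_def scalar_prod_def atLeast0LessThan intro!: sum.cong)
  also have "\<dots> = (\<Sum>j<m. \<Sum>i<n. B$$(j,i) * A$$(i,j))"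
    by (subst sum.swap) (simp add: mult.commute)
  also have "\<dots> = tr (B * A)"
    using assms by (auto simp: tr_def scalar_prod_def atLeast0LessThan intro!: sum.cong)
  finally show ?thesis .
qed

lemma R_le: assumes "0 \<le> s" "density n \<tau>"
  "incoherent n ((1 / (1 + complex_of_real s)) \<cdot>\<^sub>m (\<sigma> + complex_of_real s \<cdot>\<^sub>m \<tau>))"
  shows "robustness n \<sigma> \<le> s"
  unfolding robustness_def
  by (rule cInf_lower) (use assms in \<open>auto simp: bdd_below_def\<close>)

lemma R_ge: assumes "\<exists>s. s \<in> {s. s \<ge> 0 \<and> (\<exists>\<tau>. density n \<tau> \<and>
        incoherent n ((1 / (1 + complex_of_real s)) \<cdot>\<^sub>m (\<sigma> + complex_of_real s \<cdot>\<^sub>m \<tau>)))}"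
  and "\<And>s \<tau>. 0 \<le> s \<Longrightarrow> density n \<tau> \<Longrightarrow>
        incoherent n ((1 / (1 + complex_of_real s)) \<cdot>\<^sub>m (\<sigma> + complex_of_real s \<cdot>\<^sub>m \<tau>)) \<Longrightarrow> z \<le> s"
  shows "z \<le> robustness n \<sigma>"
  unfolding robustness_def
  by (rule cInf_greatest) (use assms in auto)

lemma incoh_block:
  assumes Z: "incoherent n Z" and f: "inj_on f {..<m}" "f ` {..<m} \<subseteq> {..<n}" and c: "0 \<le> c"
    and E: "E \<in> carrier_mat m m"
    and e: "\<And>a b. a<m \<Longrightarrow> b<m \<Longrightarrow> E$$(a,b) = complex_of_real c * Z$$(f a, f b)"
    and t: "tr E = 1"
  shows "incoherent m E"
proof -
  have Zp: "psd n Z" and Zd: "\<And>i j. i<n \<Longrightarrow> j<n \<Longrightarrow> i \<noteq> j \<Longrightarrow> Z$$(i,j) = 0"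
    using Z by (auto simp: incoherent_def density_def)
  have "psd m E" by (rule psd_sub[OF Zp E f c e])
  moreover have "E$$(a,b) = 0" if "a<m" "b<m" "a\<noteq>b" for a b
  proof -
    have "f a \<noteq> f b" using f(1) that by (auto dest: inj_onD)
    moreover have "f a < n" "f b < n" using f(2) that by auto
    ultimately show ?thesis using e[OF that(1,2)] Zd by simp
  qed
  ultimately show ?thesis using t by (auto simp: incoherent_def density_def)
qed

lemma R_incoherent: assumes "incoherent n \<sigma>" shows "robustness n \<sigma> = 0"
proof (rule antisym)
  have \<sigma>: "\<sigma> \<in> carrier_mat n n" "density n \<sigma>" using assms by (auto simp: incoherent_def density_def psd_def)
  have eq: "(1 / (1 + complex_of_real 0)) \<cdot>\<^sub>m (\<sigma> + complex_of_real 0 \<cdot>\<^sub>m \<sigma>) = \<sigma>"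
    using \<sigma> by (intro eq_matI) auto
  show "robustness n \<sigma> \<le> 0" by (rule R_le[of 0 n \<sigma>]) (use \<sigma> assms eq in auto)
  have w: "density n \<sigma> \<and> incoherent n ((1 / (1 + complex_of_real 0)) \<cdot>\<^sub>m (\<sigma> + complex_of_real 0 \<cdot>\<^sub>m \<sigma>))"
    using \<sigma> assms eq by simp
  show "0 \<le> robustness n \<sigma>" by (rule R_ge) (use w in blast)+
qed




locale ens =
  fixes k d :: nat and \<psi> :: "nat \<Rightarrow> complex vec"
  assumes kpos: "0 < k" and kd: "k < d"
    and car: "\<And>i. i < k \<Longrightarrow> \<psi> i \<in> carrier_vec d"
    and nrm: "\<And>i. i < k \<Longrightarrow> map_vec cnj (\<psi> i) \<bullet> \<psi> i = 1"
    and orth: "\<And>i j. i < k \<Longrightarrow> j < k \<Longrightarrow> i \<noteq> j \<Longrightarrow> map_vec cnj (\<psi> i) \<bullet> \<psi> j = 0"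
begin

lemma dpos: "0 < d" using kpos kd by simp

lemma ip: "i<k \<Longrightarrow> j<k \<Longrightarrow> (\<Sum>a<d. cnj (\<psi> i $ a) * \<psi> j $ a) = (if i = j then 1 else 0)"
  using nrm[of i] orth[of i j] car[of i] car[of j]
  by (auto simp: scalar_prod_def atLeast0LessThan)

definition Pf :: "nat \<Rightarrow> nat \<Rightarrow> complex" where
  "Pf a b = (\<Sum>j<k. \<psi> j $ a * cnj (\<psi> j $ b))"

definition Qf :: "nat \<Rightarrow> nat \<Rightarrow> complex" where
  "Qf a b = (if a = b then 1 else 0) - Pf a b"

abbreviation \<omega> where "\<omega> \<equiv> avg_state k d (\<lambda>_. 1 / real k) (\<lambda>i. proj (\<psi> i))"

lemma dimpsi: "i<k \<Longrightarrow> dim_vec (\<psi> i) = d"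
  using car carrier_vecD by blast

lemma proj_car: "i<k \<Longrightarrow> proj (\<psi> i) \<in> carrier_mat d d"
  unfolding proj_def by (simp add: dimpsi)

lemma proj_ent: "i<k \<Longrightarrow> a<d \<Longrightarrow> b<d \<Longrightarrow> proj (\<psi> i) $$ (a,b) = \<psi> i $ a * cnj (\<psi> i $ b)"
  unfolding proj_def by (simp add: dimpsi)

lemma omega_car: "\<omega> \<in> carrier_mat d d" unfolding avg_state_def by simp

lemma omega_ent2: "a<d \<Longrightarrow> b<d \<Longrightarrow> \<omega> $$ (a,b) = (\<Sum>j<k. complex_of_real (1 / real k) * proj (\<psi> j) $$ (a,b))"
  unfolding avg_state_def by simp

lemma omega_ent: assumes "a<d" "b<d" shows "\<omega> $$ (a,b) = complex_of_real (1 / real k) * Pf a b"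
proof -
  have "\<omega> $$ (a,b) = (\<Sum>j<k. complex_of_real (1 / real k) * (\<psi> j $ a * cnj (\<psi> j $ b)))"
    unfolding omega_ent2[OF assms] using assms by (intro sum.cong refl) (simp add: proj_ent)
  then show ?thesis unfolding Pf_def by (simp add: sum_distrib_left)
qed

lemma cnj_Pf: "cnj (Pf a b) = Pf b a"
  by (simp add: Pf_def cnj_sum mult.commute)

lemma cnj_Qf: "cnj (Qf a b) = Qf b a"
  by (simp add: Qf_def cnj_Pf)

lemma PP: "(\<Sum>c<d. Pf a c * Pf c b) = Pf a b"
proof -
  have "(\<Sum>c<d. Pf a c * Pf c b) = (\<Sum>c<d. \<Sum>i<k. \<Sum>j<k. \<psi> i $ a * (cnj (\<psi> i $ c) * \<psi> j $ c) * cnj (\<psi> j $ b))"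
    by (simp add: Pf_def sum_distrib_left sum_distrib_right mult_ac)
  also have "\<dots> = (\<Sum>i<k. \<Sum>j<k. \<Sum>c<d. \<psi> i $ a * (cnj (\<psi> i $ c) * \<psi> j $ c) * cnj (\<psi> j $ b))"
    by (simp only: sum.swap[where A="{..<d}" and B="{..<k}"])
  also have "\<dots> = (\<Sum>i<k. \<Sum>j<k. \<psi> i $ a * (\<Sum>c<d. cnj (\<psi> i $ c) * \<psi> j $ c) * cnj (\<psi> j $ b))"
    by (simp add: sum_distrib_left sum_distrib_right)
  also have "\<dots> = (\<Sum>i<k. \<Sum>j<k. if j = i then \<psi> i $ a * cnj (\<psi> j $ b) else 0)"
    by (intro sum.cong refl) (auto simp: ip)
  also have "\<dots> = Pf a b" by (simp add: Pf_def)
  finally show ?thesis .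
qed

lemma QQ: assumes "a<d" "b<d" shows "(\<Sum>c<d. cnj (Qf c a) * Qf c b) = Qf a b"
proof -
  have "(\<Sum>c<d. cnj (Qf c a) * Qf c b) = (\<Sum>c<d. Qf a c * Qf c b)" by (simp add: cnj_Qf)
  also have "\<dots> = (\<Sum>c<d. (if c = a then (if a = b then 1 else 0) else 0)
      - (if a = c then Pf c b else 0) - (if c = b then Pf a c else 0) + Pf a c * Pf c b)"
    by (intro sum.cong refl) (auto simp: Qf_def algebra_simps)
  also have "\<dots> = (if a = b then 1 else 0) - Pf a b - Pf a b + Pf a b"
    using assms by (simp add: sum.distrib sum_subtractf PP)
  finally show ?thesis by (simp add: Qf_def)
qed

definition Qm where "Qm = mat d d (\<lambda>(a,b). Qf a b)"

lemma Qm_psd: "psd d Qm"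
  by (rule psd_gram[where Y = Qf and C = "{..<d}"]) (auto simp: Qm_def QQ)

lemma Qpsi: assumes "j<k" "c<d" shows "(\<Sum>a<d. Qf c a * \<psi> j $ a) = 0"
proof -
  have "(\<Sum>a<d. Qf c a * \<psi> j $ a) = (\<Sum>a<d. (if c = a then \<psi> j $ a else 0) - Pf c a * \<psi> j $ a)"
    by (intro sum.cong) (auto simp: Qf_def algebra_simps)
  also have "\<dots> = \<psi> j $ c - (\<Sum>a<d. Pf c a * \<psi> j $ a)" using assms by (simp add: sum_subtractf)
  also have "(\<Sum>a<d. Pf c a * \<psi> j $ a) = (\<Sum>a<d. \<Sum>i<k. \<psi> i $ c * (cnj (\<psi> i $ a) * \<psi> j $ a))"
    by (simp add: Pf_def sum_distrib_right sum_distrib_left mult_ac)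
  also have "\<dots> = (\<Sum>i<k. \<psi> i $ c * (\<Sum>a<d. cnj (\<psi> i $ a) * \<psi> j $ a))"
    by (simp only: sum.swap[where A="{..<d}" and B="{..<k}"] sum_distrib_left)
  also have "\<dots> = (\<Sum>i<k. if i = j then \<psi> j $ c else 0)"
    using assms by (intro sum.cong refl) (auto simp: ip)
  finally show ?thesis using assms by simp
qed

lemma proj_density: assumes "j<k" shows "density d (proj (\<psi> j))"
proof -
  have "psd d (proj (\<psi> j))"
    by (rule psd_gram[where Y = "\<lambda>(_::unit) a. cnj (\<psi> j $ a)" and C = UNIV])
       (use assms proj_car in \<open>auto simp: proj_ent\<close>)
  moreover have "tr (proj (\<psi> j)) = 1"
    using ip[OF assms assms] car[OF assms]
    by (simp add: tr_def proj_def mult.commute)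
  ultimately show ?thesis by (simp add: density_def)
qed

lemma tr_proj: assumes "M \<in> carrier_mat d d" "j<k" shows "tr (M * proj (\<psi> j)) = qf d M (\<psi> j)"
  using assms car[OF assms(2)]
  by (auto simp: tr_def qf_def proj_def scalar_prod_def atLeast0LessThan sum_distrib_left mult_ac
      intro!: sum.cong)

lemma qf_alt: "qf n X v = (\<Sum>a<n. cnj (v$a) * (\<Sum>b<n. X$$(a,b) * v$b))"
  by (simp add: qf_def sum_distrib_left mult.assoc)

lemma qf_id: assumes "j<k" shows "qf d (1\<^sub>m d) (\<psi> j) = 1"
proof -
  have inner: "(\<Sum>b<d. 1\<^sub>m d $$ (a,b) * \<psi> j $ b) = \<psi> j $ a" if a: "a<d" for a
  proof -
    have "(\<Sum>b<d. 1\<^sub>m d $$ (a,b) * \<psi> j $ b) = (\<Sum>b<d. if b = a then \<psi> j $ a else 0)"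
      using a by (intro sum.cong) auto
    then show ?thesis using a by simp
  qed
  have "qf d (1\<^sub>m d) (\<psi> j) = (\<Sum>a<d. cnj (\<psi> j $ a) * \<psi> j $ a)"
    unfolding qf_alt by (intro sum.cong refl) (subst inner, auto)
  also have "\<dots> = 1" using ip[OF assms assms] by simp
  finally show ?thesis .
qed

lemma qf_sum: assumes "\<And>a b. a<n \<Longrightarrow> b<n \<Longrightarrow> X$$(a,b) = (\<Sum>i<m. M i $$ (a,b))"
  shows "qf n X v = (\<Sum>i<m. qf n (M i) v)"
proof -
  have "qf n X v = (\<Sum>a<n. \<Sum>b<n. \<Sum>i<m. cnj (v$a) * M i $$ (a,b) * v$b)"
    unfolding qf_def by (auto simp: assms sum_distrib_left sum_distrib_right intro!: sum.cong)
  also have "\<dots> = (\<Sum>i<m. qf n (M i) v)"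
    unfolding qf_def by (simp only: sum.swap[where A="{..<n}" and B="{..<m}"])
  finally show ?thesis .
qed

definition val where "val M = (\<Sum>j<k. 1 / real k * Re (tr (M j * proj (\<psi> j))))"

lemma val_le: assumes "POVM k d M" shows "val M \<le> 1"
proof -
  have Mp: "\<And>j. j<k \<Longrightarrow> psd d (M j)" using assms by (simp add: POVM_def)
  have Ms: "mat d d (\<lambda>(a,b). \<Sum>j<k. M j $$ (a,b)) = 1\<^sub>m d" using assms by (simp add: POVM_def)
  have one: "Re (tr (M j * proj (\<psi> j))) \<le> 1" if j: "j<k" for j
  proof -
    have nn: "0 \<le> Re (qf d (M i) (\<psi> j))" if "i<k" for i
      using Mp[OF that] car[OF j] unfolding psd_iff by (auto simp: less_eq_complex_def)
    have "Re (tr (M j * proj (\<psi> j))) = Re (qf d (M j) (\<psi> j))"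
      using Mp[OF j] j by (simp add: tr_proj psd_def)
    also have "\<dots> \<le> (\<Sum>i<k. Re (qf d (M i) (\<psi> j)))"
      by (rule member_le_sum[of j "{..<k}" "\<lambda>i. Re (qf d (M i) (\<psi> j))"]) (use j nn in auto)
    also have "\<dots> = Re (qf d (1\<^sub>m d) (\<psi> j))"
    proof -
      have "qf d (1\<^sub>m d) (\<psi> j) = (\<Sum>i<k. qf d (M i) (\<psi> j))"
        by (rule qf_sum) (subst Ms[symmetric], simp)
      then show ?thesis by simp
    qed
    also have "\<dots> = 1" using qf_id[OF j] by simp
    finally show ?thesis .
  qed
  have "val M \<le> (\<Sum>j<k. 1 / real k * 1)"
    unfolding val_def by (intro sum_mono mult_left_mono one) auto
  also have "\<dots> = 1" using kpos by simp
  finally show ?thesis .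
qed

definition M0 where "M0 j = mat d d (\<lambda>(a,b). \<psi> j $ a * cnj (\<psi> j $ b) + (if j = 0 then Qf a b else 0))"

lemma M0_POVM: "POVM k d M0"
  unfolding POVM_def
proof (intro conjI allI impI)
  fix j assume j: "j<k"
  show "psd d (M0 j)"
  proof (cases "j = 0")
    case True
    show ?thesis
      by (rule psd_add[OF proj_density[OF j, unfolded density_def, THEN conjunct1] Qm_psd])
         (use True j in \<open>auto simp: M0_def Qm_def proj_ent\<close>)
  next
    case False
    have "M0 j = proj (\<psi> j)" using False j car[OF j] by (intro eq_matI) (auto simp: M0_def proj_def)
    then show ?thesis using proj_density[OF j] by (simp add: density_def)
  qed
next
  show "mat d d (\<lambda>(a, b). \<Sum>j<k. M0 j $$ (a, b)) = 1\<^sub>m d"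
  proof (intro eq_matI)
    fix a b assume ab: "a < dim_row (1\<^sub>m d :: complex mat)" "b < dim_col (1\<^sub>m d :: complex mat)"
    have "(\<Sum>j<k. M0 j $$ (a, b)) = Pf a b + (\<Sum>j<k. if j = 0 then Qf a b else 0)"
      using ab by (simp add: M0_def sum.distrib Pf_def)
    also have "\<dots> = 1\<^sub>m d $$ (a,b)" using kpos ab by (simp add: Qf_def)
    finally show "mat d d (\<lambda>(a, b). \<Sum>j<k. M0 j $$ (a, b)) $$ (a, b) = 1\<^sub>m d $$ (a, b)"
      using ab by simp
  qed auto
qed

lemma val_M0: "val M0 = 1"
proof -
  have one: "tr (M0 j * proj (\<psi> j)) = 1" if j: "j<k" for j
  proof -
    have "tr (M0 j * proj (\<psi> j)) = qf d (M0 j) (\<psi> j)" by (rule tr_proj) (auto simp: M0_def j)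
    also have "\<dots> = (\<Sum>a<d. cnj (\<psi> j $ a) * (\<psi> j $ a * (\<Sum>b<d. cnj (\<psi> j $ b) * \<psi> j $ b)
         + (if j = 0 then (\<Sum>b<d. Qf a b * \<psi> j $ b) else 0)))"
      unfolding qf_alt
      by (intro sum.cong refl) (auto simp: M0_def algebra_simps sum.distrib sum_distrib_left)
    also have "\<dots> = (\<Sum>a<d. cnj (\<psi> j $ a) * \<psi> j $ a)"
      using ip[OF j j] by (intro sum.cong refl) (auto simp: Qpsi[OF j] Qpsi[OF kpos])
    also have "\<dots> = 1" using ip[OF j j] by simp
    finally show ?thesis .
  qed
  show ?thesis unfolding val_def using kpos by (simp add: one)
qed

lemma Psuc: "P_suc k d (\<lambda>_. 1 / real k) (\<lambda>i. proj (\<psi> i)) = 1"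
proof -
  have eq: "{(\<Sum>j<k. 1 / real k * Re (tr (M j * proj (\<psi> j)))) | M. POVM k d M} = {val M | M. POVM k d M}"
    by (simp add: val_def)
  show ?thesis unfolding P_suc_def eq
  proof (rule antisym)
    show "Sup {val M |M. POVM k d M} \<le> 1"
      by (rule cSup_least) (use M0_POVM val_le in auto)
    show "1 \<le> Sup {val M |M. POVM k d M}"
      by (rule cSup_upper) (use M0_POVM val_M0 val_le in \<open>auto simp: bdd_above_def\<close>)
  qed
qed

end



context ens begin

lemma idx: assumes "i<k" "a<d" shows "i*d+a < k*d"
proof -
  have "i*d + a < i*d + d" using assms by simp
  also have "\<dots> = (i+1)*d" by simp
  also have "\<dots> \<le> k*d" using assms by (intro mult_le_mono1) simp
  finally show ?thesis .
qed

lemma blk_div: "a<d \<Longrightarrow> (i*d+a) div d = i"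
  using dpos by simp

lemma blk_ne: "a<d \<Longrightarrow> b<d \<Longrightarrow> i \<noteq> j \<Longrightarrow> i*d+a \<noteq> j*d+b"
  using blk_div by metis

lemma blk_inj: "inj_on (\<lambda>a. j*d+a) {..<d}" by (simp add: inj_on_def)

lemma blk_img: "j<k \<Longrightarrow> (\<lambda>a. j*d+a) ` {..<d} \<subseteq> {..<k*d}" using idx by auto

lemma tr_eq_sum: "A \<in> carrier_mat n n \<Longrightarrow> tr A = (\<Sum>x<n. A$$(x,x))"
  by (simp add: tr_def)

lemma cplx_nonneg_Re0: "0 \<le> (z::complex) \<Longrightarrow> Re z = 0 \<Longrightarrow> z = 0"
  by (simp add: less_eq_complex_def complex_eq_iff)

lemma cplx_nonneg_real: "0 \<le> (z::complex) \<Longrightarrow> z = complex_of_real (Re z)"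
  by (simp add: less_eq_complex_def complex_eq_iff)

lemma nonneg_sum_zero:
  fixes f :: "nat \<Rightarrow> real"
  assumes "finite A" "\<And>x. x\<in>A \<Longrightarrow> 0 \<le> f x" "sum f A = 0" "x \<in> A" shows "f x = 0"
  using assms sum_nonneg_eq_0_iff by blast

lemma block_concentrated:
  assumes X: "density (k*d) X" and j: "j<k"
    and t: "Re (\<Sum>a<d. X $$ (j*d+a, j*d+a)) = 1"
    and i: "i<k" "i \<noteq> j" and a: "a<d" and b: "b<d"
  shows "X $$ (i*d+a, i*d+b) = 0"
proof -
  have Xp: "psd (k*d) X" and Xc: "X \<in> carrier_mat (k*d) (k*d)" and tX: "tr X = 1"
    using X by (auto simp: density_def psd_def)
  have dg: "0 \<le> X $$ (x,x)" if "x < k*d" for x using psd_diag[OF Xp that] .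
  define B where "B i = Re (\<Sum>a<d. X $$ (i*d+a, i*d+a))" for i
  have Bnn: "0 \<le> B i" if "i<k" for i
    unfolding B_def Re_sum using dg idx that by (intro sum_nonneg) (auto simp: less_eq_complex_def)
  have "(\<Sum>i<k. B i) = Re (tr X)"
    unfolding B_def tr_eq_sum[OF Xc] sum_blocks Re_sum ..
  hence sB: "(\<Sum>i<k. B i) = 1" using tX by simp
  have "(\<Sum>i<k. B i) = B j + (\<Sum>i\<in>{..<k}-{j}. B i)"
    using j by (simp add: sum.remove)
  hence "(\<Sum>i\<in>{..<k}-{j}. B i) = 0" using sB t unfolding B_def by simp
  hence Bi: "B i = 0" using i Bnn by (intro nonneg_sum_zero[of "{..<k}-{j}" B]) auto
  have "Re (X $$ (i*d+a, i*d+a)) = 0"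
  proof (rule nonneg_sum_zero[of "{..<d}" "\<lambda>a. Re (X $$ (i*d+a, i*d+a))"])
    show "(\<Sum>a<d. Re (X $$ (i*d+a, i*d+a))) = 0" using Bi unfolding B_def Re_sum .
    show "\<And>x. x \<in> {..<d} \<Longrightarrow> 0 \<le> Re (X $$ (i*d+x, i*d+x))"
      using dg idx i by (auto simp: less_eq_complex_def)
  qed (use a in auto)
  hence "X $$ (i*d+a, i*d+a) = 0" using dg[OF idx[OF i(1) a]] by (rule cplx_nonneg_Re0[rotated])
  then show ?thesis using psd_zero_diag[OF Xp idx[OF i(1) a] idx[OF i(1) b]] by simp
qed

lemma tr_comb: assumes "A \<in> carrier_mat n n" "B \<in> carrier_mat n n"
  shows "tr ((1 / (1 + complex_of_real s)) \<cdot>\<^sub>m (A + complex_of_real s \<cdot>\<^sub>m B)) =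
     (1 / (1 + complex_of_real s)) * (tr A + complex_of_real s * tr B)"
  using assms by (simp add: tr_def sum_distrib_left sum.distrib algebra_simps)

end



context ens begin

definition s0 where "s0 = real d / real k - 1"
definition \<tau>0 where "\<tau>0 = mat d d (\<lambda>(a,b). complex_of_real (1 / (real d - real k)) * Qf a b)"

lemma s0_nonneg: "0 \<le> s0" using kpos kd by (simp add: s0_def field_simps)

lemma trQ: "(\<Sum>a<d. Qf a a) = of_nat d - of_nat k"
proof -
  have "(\<Sum>a<d. Pf a a) = (\<Sum>j<k. \<Sum>a<d. cnj (\<psi> j $ a) * \<psi> j $ a)"
    unfolding Pf_def by (subst sum.swap) (simp add: mult.commute)
  also have "\<dots> = of_nat k" by (simp add: ip)
  finally show ?thesis by (simp add: Qf_def sum_subtractf)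
qed

lemma tau0_density: "density d \<tau>0"
proof -
  have "psd d \<tau>0"
    by (rule psd_sub[OF Qm_psd, where f = id and c = "1 / (real d - real k)"])
       (use kd in \<open>auto simp: \<tau>0_def Qm_def\<close>)
  moreover have "tr \<tau>0 = 1"
  proof -
    have "tr \<tau>0 = complex_of_real (1 / (real d - real k)) * (\<Sum>a<d. Qf a a)"
      by (simp add: tr_def \<tau>0_def sum_distrib_left)
    also have "\<dots> = 1" using kd by (simp add: trQ field_simps)
    finally show ?thesis .
  qed
  ultimately show ?thesis by (simp add: density_def)
qed

lemma E0_eq: "(1 / (1 + complex_of_real s0)) \<cdot>\<^sub>m (\<omega> + complex_of_real s0 \<cdot>\<^sub>m \<tau>0) =
   mat d d (\<lambda>(a,b). if a = b then complex_of_real (1 / real d) else 0)"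
proof (rule eq_matI)
  have c1: "(1 / (1 + complex_of_real s0)) * complex_of_real (1 / real k) = complex_of_real (1 / real d)"
  proof -
    have "(1 / (1 + complex_of_real s0)) * complex_of_real (1 / real k) = complex_of_real (1 / (1 + s0) * (1 / real k))"
      by simp
    also have "1 / (1 + s0) * (1 / real k) = 1 / real d" using kpos kd by (simp add: s0_def field_simps)
    finally show ?thesis .
  qed
  have c2: "(1 / (1 + complex_of_real s0)) * (complex_of_real s0 * complex_of_real (1 / (real d - real k)))
      = complex_of_real (1 / real d)"
  proof -
    have "(1 / (1 + complex_of_real s0)) * (complex_of_real s0 * complex_of_real (1 / (real d - real k)))
       = complex_of_real (1 / (1 + s0) * (s0 * (1 / (real d - real k))))"
      by simp
    also have "1 / (1 + s0) * (s0 * (1 / (real d - real k))) = 1 / real d"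
      using kpos kd by (simp add: s0_def field_simps)
    finally show ?thesis .
  qed
  fix a b assume ab: "a < dim_row (mat d d (\<lambda>(a,b). if a = b then complex_of_real (1 / real d) else 0))"
    "b < dim_col (mat d d (\<lambda>(a,b). if a = b then complex_of_real (1 / real d) else 0))"
  hence ab': "a<d" "b<d" by auto
  have "((1 / (1 + complex_of_real s0)) \<cdot>\<^sub>m (\<omega> + complex_of_real s0 \<cdot>\<^sub>m \<tau>0)) $$ (a,b) =
      (1 / (1 + complex_of_real s0)) * complex_of_real (1 / real k) * Pf a b +
      (1 / (1 + complex_of_real s0)) * (complex_of_real s0 * complex_of_real (1 / (real d - real k))) * Qf a b"
    using ab' omega_car by (simp add: omega_ent \<tau>0_def algebra_simps)
  also have "\<dots> = complex_of_real (1 / real d) * (Pf a b + Qf a b)"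
    unfolding c1 c2 by (simp add: algebra_simps)
  also have "\<dots> = mat d d (\<lambda>(a,b). if a = b then complex_of_real (1 / real d) else 0) $$ (a,b)"
    using ab' by (simp add: Qf_def)
  finally show "((1 / (1 + complex_of_real s0)) \<cdot>\<^sub>m (\<omega> + complex_of_real s0 \<cdot>\<^sub>m \<tau>0)) $$ (a,b) =
      mat d d (\<lambda>(a,b). if a = b then complex_of_real (1 / real d) else 0) $$ (a,b)" .
qed (use omega_car in \<open>auto simp: \<tau>0_def\<close>)

lemma E0_incoh: "incoherent d ((1 / (1 + complex_of_real s0)) \<cdot>\<^sub>m (\<omega> + complex_of_real s0 \<cdot>\<^sub>m \<tau>0))"
proof -
  let ?E = "mat d d (\<lambda>(a,b). if a = b then complex_of_real (1 / real d) else 0)"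
  have "psd d ?E" by (rule psd_diagonal) (auto simp: less_eq_complex_def)
  moreover have "tr ?E = 1" using dpos by (simp add: tr_def)
  ultimately show ?thesis unfolding E0_eq by (auto simp: incoherent_def density_def)
qed

lemma R_omega_le: "robustness d \<omega> \<le> s0"
  by (rule R_le[OF s0_nonneg tau0_density E0_incoh])

lemma R_omega_set: "\<exists>s. s \<in> {s. s \<ge> 0 \<and> (\<exists>\<tau>. density d \<tau> \<and>
        incoherent d ((1 / (1 + complex_of_real s)) \<cdot>\<^sub>m (\<omega> + complex_of_real s \<cdot>\<^sub>m \<tau>)))}"
  using s0_nonneg tau0_density E0_incoh by blast

end



lemma arith1:
  fixes K s t :: real and Z W :: complex
  assumes "0 < t" "0 \<le> K" "0 \<le> s"
  shows "(1 / (1 + complex_of_real (K*s*t))) * (complex_of_real K * ((1 + complex_of_real s) * Z - complex_of_real s * W)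
     + complex_of_real (K*s*t) * (complex_of_real (1/t) * W)) = complex_of_real (K*(1+s)/(1+K*s*t)) * Z"
proof -
  have "0 \<le> K*s*t" using assms by simp
  hence nz: "1 + K*s*t \<noteq> 0" by linarith
  have kst: "K*s*t*(1/t) = K*s" using assms by (simp add: field_simps)
  have "complex_of_real (K*s*t) * (complex_of_real (1/t) * W) = complex_of_real (K*s*t*(1/t)) * W"
    by (simp only: of_real_mult mult.assoc)
  also have "\<dots> = complex_of_real (K*s) * W" by (simp only: kst)
  also have "\<dots> = complex_of_real K * (complex_of_real s * W)" by simp
  finally have "complex_of_real (K*s*t) * (complex_of_real (1/t) * W) = complex_of_real K * (complex_of_real s * W)" .
  hence "(complex_of_real K * ((1 + complex_of_real s) * Z - complex_of_real s * W)
     + complex_of_real (K*s*t) * (complex_of_real (1/t) * W)) = complex_of_real (K*(1+s)) * Z"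
    by (simp add: algebra_simps)
  moreover have "(1 / (1 + complex_of_real (K*s*t))) * complex_of_real (K*(1+s)) = complex_of_real (K*(1+s)/(1+K*s*t))"
  proof -
    have "1 + complex_of_real (K*s*t) = complex_of_real (1 + K*s*t)" by simp
    then show ?thesis by (simp only:) (simp add: of_real_divide)
  qed
  ultimately show ?thesis by (simp add: mult.assoc)
qed

lemma channel_facts_ex:
  assumes ch: "channel m n N"
  shows "\<exists>(r::nat) \<kappa>. (\<forall>\<rho>\<in>carrier_mat m m. N \<rho> \<in> carrier_mat n n) \<and>
    (\<forall>\<rho>\<in>carrier_mat m m. \<forall>x<n. \<forall>y<n. N \<rho> $$ (x,y) =
        (\<Sum>i<r. \<Sum>a<m. \<Sum>b<m. \<kappa> i $$ (x,a) * \<rho>$$(a,b) * cnj (\<kappa> i $$ (y,b)))) \<and>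
    (\<forall>a<m. \<forall>b<m. (\<Sum>i<r. \<Sum>x<n. cnj (\<kappa> i $$ (x,a)) * \<kappa> i $$ (x,b)) = (if a = b then 1 else 0))"
proof (rule channel_facts[OF ch])
  fix r :: nat and \<kappa>
  assume A: "\<And>\<rho>. \<rho> \<in> carrier_mat m m \<Longrightarrow> N \<rho> \<in> carrier_mat n n"
    and B: "\<And>\<rho> x y. \<rho> \<in> carrier_mat m m \<Longrightarrow> x<n \<Longrightarrow> y<n \<Longrightarrow> N \<rho> $$ (x,y) =
        (\<Sum>i<r. \<Sum>a<m. \<Sum>b<m. \<kappa> i $$ (x,a) * \<rho>$$(a,b) * cnj (\<kappa> i $$ (y,b)))"
    and C: "\<And>a b. a<m \<Longrightarrow> b<m \<Longrightarrow> (\<Sum>i<r. \<Sum>x<n. cnj (\<kappa> i $$ (x,a)) * \<kappa> i $$ (x,b)) = (if a = b then 1 else 0)"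
  show ?thesis
    by (rule exI[of _ r], rule exI[of _ \<kappa>]) (simp add: A B C)
qed

context ens begin

lemma block_le1:
  assumes X: "density (k*d) X" and j: "j<k"
  shows "Re (\<Sum>a<d. X $$ (j*d+a, j*d+a)) \<le> 1"
proof -
  have Xp: "psd (k*d) X" and Xc: "X \<in> carrier_mat (k*d) (k*d)" and tX: "tr X = 1"
    using X by (auto simp: density_def psd_def)
  have dg: "0 \<le> X $$ (x,x)" if "x < k*d" for x using psd_diag[OF Xp that] .
  define B where "B i = Re (\<Sum>a<d. X $$ (i*d+a, i*d+a))" for i
  have Bnn: "0 \<le> B i" if "i<k" for i
    unfolding B_def Re_sum using dg idx that by (intro sum_nonneg) (auto simp: less_eq_complex_def)
  have "(\<Sum>i<k. B i) = Re (tr X)"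
    unfolding B_def tr_eq_sum[OF Xc] sum_blocks Re_sum ..
  hence sB: "(\<Sum>i<k. B i) = 1" using tX by simp
  have "B j \<le> (\<Sum>i<k. B i)" by (rule member_le_sum) (use j Bnn in auto)
  then show ?thesis using sB by (simp add: B_def)
qed

lemma block_real:
  assumes X: "psd (k*d) X" and j: "j<k"
  shows "(\<Sum>a<d. X $$ (j*d+a, j*d+a)) = complex_of_real (Re (\<Sum>a<d. X $$ (j*d+a, j*d+a)))"
    and "0 \<le> Re (\<Sum>a<d. X $$ (j*d+a, j*d+a))"
proof -
  have "0 \<le> (\<Sum>a<d. X $$ (j*d+a, j*d+a))"
    using psd_diag[OF X] idx[OF j] by (intro sum_nonneg) auto
  then show "(\<Sum>a<d. X $$ (j*d+a, j*d+a)) = complex_of_real (Re (\<Sum>a<d. X $$ (j*d+a, j*d+a)))"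
    and "0 \<le> Re (\<Sum>a<d. X $$ (j*d+a, j*d+a))"
    by (auto simp: less_eq_complex_def complex_eq_iff)
qed

lemma core:
  assumes MIO: "MIO d (k*d) N"
    and succ: "(\<Sum>j<k. 1 / real k * Re (tr_proj_B d j (N (proj (\<psi> j))))) = 1"
  shows "(\<Sum>j<k. 1 / real k * robustness d (ptrace_B k d (N (proj (\<psi> j))))) \<le> robustness d \<omega>"
proof -
  have ch: "channel d (k*d) N" and mio: "\<And>\<rho>. incoherent d \<rho> \<Longrightarrow> incoherent (k*d) (N \<rho>)"
    using MIO by (auto simp: MIO_def)
  from channel_facts_ex[OF ch] obtain r :: nat and \<kappa> :: "nat \<Rightarrow> complex mat" where H: "(\<forall>\<rho>\<in>carrier_mat d d. N \<rho> \<in> carrier_mat (k*d) (k*d)) \<and>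
    (\<forall>\<rho>\<in>carrier_mat d d. \<forall>x<k*d. \<forall>y<k*d. N \<rho> $$ (x,y) =
        (\<Sum>i<r. \<Sum>a<d. \<Sum>b<d. \<kappa> i $$ (x,a) * \<rho>$$(a,b) * cnj (\<kappa> i $$ (y,b)))) \<and>
    (\<forall>a<d. \<forall>b<d. (\<Sum>i<r. \<Sum>x<k*d. cnj (\<kappa> i $$ (x,a)) * \<kappa> i $$ (x,b)) = (if a = b then 1 else 0))"
    by blast
  have Ncar: "\<And>\<rho>. \<rho> \<in> carrier_mat d d \<Longrightarrow> N \<rho> \<in> carrier_mat (k*d) (k*d)"
    and Nent: "\<And>\<rho> x y. \<rho> \<in> carrier_mat d d \<Longrightarrow> x<k*d \<Longrightarrow> y<k*d \<Longrightarrow> N \<rho> $$ (x,y) =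
        (\<Sum>i<r. \<Sum>a<d. \<Sum>b<d. \<kappa> i $$ (x,a) * \<rho>$$(a,b) * cnj (\<kappa> i $$ (y,b)))"
    and Ntp: "\<And>a b. a<d \<Longrightarrow> b<d \<Longrightarrow> (\<Sum>i<r. \<Sum>x<k*d. cnj (\<kappa> i $$ (x,a)) * \<kappa> i $$ (x,b)) = (if a = b then 1 else 0)"
    using H by auto
  interpret K: kraus d "k*d" r N \<kappa>
    by unfold_locales (fact Ncar, fact Nent, fact Ntp)
  note Nden = K.ch_density
  define X where "X j = N (proj (\<psi> j))" for j
  have Xd: "density (k*d) (X j)" if "j<k" for j
    using Nden[OF proj_density[OF that]] by (simp add: X_def)
  have Xp: "psd (k*d) (X j)" if "j<k" for j using Xd[OF that] by (simp add: density_def)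
  define u where "u j = Re (\<Sum>a<d. X j $$ (j*d+a, j*d+a))" for j
  have ule: "u j \<le> 1" if "j<k" for j unfolding u_def by (rule block_le1[OF Xd[OF that] that])
  have "(\<Sum>j<k. 1 / real k * u j) = 1" using succ by (simp add: u_def X_def tr_proj_B_def)
  hence "(\<Sum>j<k. 1 / real k * (1 - u j)) = 0" using kpos
    by (simp add: right_diff_distrib sum_subtractf)
  hence u1: "u j = 1" if "j<k" for j
  proof -
    assume h: "(\<Sum>j<k. 1 / real k * (1 - u j)) = 0"
    have "1 / real k * (1 - u j) = 0"
      by (rule nonneg_sum_zero[OF _ _ h]) (use ule that kpos in auto)
    then show ?thesis using kpos by simp
  qed
  have zb: "X j $$ (i*d+a, i*d+b) = 0" if "j<k" "i<k" "i\<noteq>j" "a<d" "b<d" for i j a b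
    by (rule block_concentrated[OF Xd[OF that(1)] that(1) _ that(2-5)]) (use u1[OF that(1)] in \<open>simp add: u_def\<close>)
  define \<sigma> where "\<sigma> j = ptrace_B k d (X j)" for j
  have \<sigma>car: "\<sigma> j \<in> carrier_mat d d" for j by (simp add: \<sigma>_def ptrace_B_def)
  have \<sigma>ent: "\<sigma> j $$ (a,b) = X j $$ (j*d+a, j*d+b)" if "j<k" "a<d" "b<d" for j a b
  proof -
    have "\<sigma> j $$ (a,b) = (\<Sum>i<k. X j $$ (i*d+a, i*d+b))"
      using that by (simp add: \<sigma>_def ptrace_B_def)
    also have "\<dots> = (\<Sum>i<k. if i = j then X j $$ (j*d+a, j*d+b) else 0)"
      using that zb by (intro sum.cong) auto
    finally show ?thesis using that by simp
  qed
  have tr\<sigma>: "tr (\<sigma> j) = 1" if "j<k" for j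
  proof -
    have "tr (\<sigma> j) = (\<Sum>a<d. X j $$ (j*d+a, j*d+a))"
      unfolding tr_eq_sum[OF \<sigma>car] using that by (intro sum.cong) (auto simp: \<sigma>ent)
    also have "\<dots> = 1"
    proof -
      have e1: "(\<Sum>a<d. X j $$ (j*d+a, j*d+a)) = complex_of_real (Re (\<Sum>a<d. X j $$ (j*d+a, j*d+a)))"
        by (rule block_real(1)[OF Xp[OF that] that])
      have e2: "Re (\<Sum>a<d. X j $$ (j*d+a, j*d+a)) = 1" using u1[OF that] by (simp only: u_def)
      show ?thesis using e1 e2 by (metis of_real_1)
    qed
    finally show ?thesis .
  qed
  have \<sigma>den: "density d (\<sigma> j)" if "j<k" for j
  proof -
    have "psd d (\<sigma> j)"
      by (rule psd_sub[OF Xp[OF that] \<sigma>car blk_inj blk_img[OF that], of 1]) (use that in \<open>auto simp: \<sigma>ent\<close>)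
    then show ?thesis using tr\<sigma>[OF that] by (simp add: density_def)
  qed
  show ?thesis
  proof (rule R_ge[OF R_omega_set])
    fix s :: real and \<tau>
    assume s: "0 \<le> s" and \<tau>: "density d \<tau>"
      and inc: "incoherent d ((1 / (1 + complex_of_real s)) \<cdot>\<^sub>m (\<omega> + complex_of_real s \<cdot>\<^sub>m \<tau>))"
    define D where "D = (1 / (1 + complex_of_real s)) \<cdot>\<^sub>m (\<omega> + complex_of_real s \<cdot>\<^sub>m \<tau>)"
    have \<tau>c: "\<tau> \<in> carrier_mat d d" using \<tau> by (simp add: density_def psd_def)
    have Dc: "D \<in> carrier_mat d d" using \<tau>c omega_car by (simp add: D_def)
    have nz: "1 + complex_of_real s \<noteq> 0"
    proof
      assume "1 + complex_of_real s = 0"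
      hence "Re (1 + complex_of_real s) = 0" by simp
      then show False using s by simp
    qed
    have \<omega>D: "\<omega> $$ (a,b) = (1 + complex_of_real s) * D $$ (a,b) + (- complex_of_real s) * \<tau> $$ (a,b)"
      if "a<d" "b<d" for a b
      using that \<tau>c omega_car nz by (simp add: D_def field_simps)
    have N\<omega>D: "N \<omega> $$ (x,y) = (1 + complex_of_real s) * N D $$ (x,y) + (- complex_of_real s) * N \<tau> $$ (x,y)"
      if "x<k*d" "y<k*d" for x y
      by (rule K.ch_lin2[OF Dc \<tau>c omega_car]) (simp_all add: \<omega>D that)
    have N\<omega>X: "N \<omega> $$ (x,y) = (\<Sum>j<k. complex_of_real (1 / real k) * X j $$ (x,y))"
      if "x<k*d" "y<k*d" for x y
      unfolding X_def by (rule K.ch_linsum[OF _ omega_car]) (simp_all add: proj_car omega_ent2 that)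
    have N\<omega>blk: "N \<omega> $$ (j*d+a, j*d+b) = complex_of_real (1 / real k) * X j $$ (j*d+a, j*d+b)"
      if "j<k" "a<d" "b<d" for j a b
    proof -
      have "N \<omega> $$ (j*d+a, j*d+b) = (\<Sum>i<k. if i = j then complex_of_real (1 / real k) * X j $$ (j*d+a, j*d+b) else 0)"
        unfolding N\<omega>X[OF idx[OF that(1,2)] idx[OF that(1,3)]]
        using that zb by (intro sum.cong) auto
      then show ?thesis using that by simp
    qed
    have \<sigma>D: "\<sigma> j $$ (a,b) = complex_of_real (real k) * ((1 + complex_of_real s) * N D $$ (j*d+a, j*d+b)
        - complex_of_real s * N \<tau> $$ (j*d+a, j*d+b))" if "j<k" "a<d" "b<d" for j a b
    proof -
      have "\<sigma> j $$ (a,b) = complex_of_real (real k) * N \<omega> $$ (j*d+a, j*d+b)"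
        using N\<omega>blk[OF that] kpos that by (simp add: \<sigma>ent)
      then show ?thesis using N\<omega>D[OF idx[OF that(1,2)] idx[OF that(1,3)]] by simp
    qed
    have NDinc: "incoherent (k*d) (N D)" using mio inc by (simp add: D_def)
    have N\<tau>d: "density (k*d) (N \<tau>)" by (rule Nden[OF \<tau>])
    have N\<tau>p: "psd (k*d) (N \<tau>)" and N\<tau>c: "N \<tau> \<in> carrier_mat (k*d) (k*d)" and trN\<tau>: "tr (N \<tau>) = 1"
      using N\<tau>d by (auto simp: density_def psd_def)
    define t where "t j = Re (\<Sum>a<d. N \<tau> $$ (j*d+a, j*d+a))" for j
    have tnn: "0 \<le> t j" if "j<k" for j unfolding t_def by (rule block_real(2)[OF N\<tau>p that])
    have treal: "(\<Sum>a<d. N \<tau> $$ (j*d+a, j*d+a)) = complex_of_real (t j)" if "j<k" for j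
      unfolding t_def by (rule block_real(1)[OF N\<tau>p that])
    have tsum: "(\<Sum>j<k. t j) = 1"
    proof -
      have "(\<Sum>j<k. t j) = Re (tr (N \<tau>))"
        unfolding t_def tr_eq_sum[OF N\<tau>c] sum_blocks Re_sum ..
      then show ?thesis using trN\<tau> by simp
    qed
    have Rj: "robustness d (\<sigma> j) \<le> real k * s * t j" if j: "j<k" for j
    proof (cases "t j > 0")
      case True
      define \<tau>j where "\<tau>j = mat d d (\<lambda>(a,b). complex_of_real (1 / t j) * N \<tau> $$ (j*d+a, j*d+b))"
      define sj where "sj = real k * s * t j"
      have sj: "0 \<le> sj" using s tnn[OF j] by (simp add: sj_def)
      have \<tau>jc: "\<tau>j \<in> carrier_mat d d" by (simp add: \<tau>j_def)
      have tr\<tau>j: "tr \<tau>j = 1"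
      proof -
        have "tr \<tau>j = complex_of_real (1 / t j) * (\<Sum>a<d. N \<tau> $$ (j*d+a, j*d+a))"
          by (simp add: tr_def \<tau>j_def sum_distrib_left)
        also have "\<dots> = 1" using True by (simp add: treal[OF j] flip: of_real_mult)
        finally show ?thesis .
      qed
      have \<tau>jd: "density d \<tau>j"
      proof -
        have "psd d \<tau>j"
          by (rule psd_sub[OF N\<tau>p \<tau>jc blk_inj blk_img[OF j], of "1 / t j"]) (use True in \<open>auto simp: \<tau>j_def\<close>)
        then show ?thesis using tr\<tau>j by (simp add: density_def)
      qed
      define Ej where "Ej = (1 / (1 + complex_of_real sj)) \<cdot>\<^sub>m (\<sigma> j + complex_of_real sj \<cdot>\<^sub>m \<tau>j)"
      have Ejc: "Ej \<in> carrier_mat d d" using \<sigma>car \<tau>jc by (simp add: Ej_def)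
      have Ejent: "Ej $$ (a,b) = complex_of_real (real k * (1+s) / (1 + real k * s * t j)) * N D $$ (j*d+a, j*d+b)"
        if "a<d" "b<d" for a b
      proof -
        have "Ej $$ (a,b) = (1 / (1 + complex_of_real sj)) * (\<sigma> j $$ (a,b) + complex_of_real sj * \<tau>j $$ (a,b))"
          using that \<sigma>car \<tau>jc by (simp add: Ej_def)
        also have "\<dots> = complex_of_real (real k * (1+s) / (1 + real k * s * t j)) * N D $$ (j*d+a, j*d+b)"
        proof -
          have tje: "\<tau>j $$ (a,b) = complex_of_real (1 / t j) * N \<tau> $$ (j*d+a, j*d+b)"
            using that by (simp add: \<tau>j_def)
          show ?thesis unfolding \<sigma>D[OF j that] tje sj_def by (rule arith1[OF True _ s]) simp
        qed
        finally show ?thesis .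
      qed
      have nzj: "1 + complex_of_real sj \<noteq> 0"
      proof
        assume "1 + complex_of_real sj = 0"
        hence "Re (1 + complex_of_real sj) = 0" by simp
        then show False using sj by simp
      qed
      have trEj: "tr Ej = 1"
        unfolding Ej_def tr_comb[OF \<sigma>car \<tau>jc] tr\<sigma>[OF j] tr\<tau>j
        using nzj by simp
      have "incoherent d Ej"
        by (rule incoh_block[OF NDinc blk_inj blk_img[OF j] _ Ejc Ejent trEj])
           (use s tnn[OF j] in \<open>auto intro!: divide_nonneg_nonneg mult_nonneg_nonneg add_nonneg_nonneg\<close>)
      then show ?thesis unfolding Ej_def sj_def by (intro R_le[OF _ \<tau>jd]) (use sj[unfolded sj_def] in auto)
    next
      case False
      hence t0: "t j = 0" using tnn[OF j] by simp
      have dz: "N \<tau> $$ (j*d+a, j*d+a) = 0" if "a<d" for a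
      proof -
        have "Re (N \<tau> $$ (j*d+a, j*d+a)) = 0"
        proof (rule nonneg_sum_zero[of "{..<d}" "\<lambda>a. Re (N \<tau> $$ (j*d+a, j*d+a))"])
          show "(\<Sum>a<d. Re (N \<tau> $$ (j*d+a, j*d+a))) = 0" using t0 unfolding t_def Re_sum .
          show "\<And>x. x \<in> {..<d} \<Longrightarrow> 0 \<le> Re (N \<tau> $$ (j*d+x, j*d+x))"
            using psd_diag[OF N\<tau>p] idx[OF j] by (auto simp: less_eq_complex_def)
        qed (use that in auto)
        then show ?thesis using psd_diag[OF N\<tau>p idx[OF j that]] cplx_nonneg_Re0 by blast
      qed
      have Nz: "N \<tau> $$ (j*d+a, j*d+b) = 0" if "a<d" "b<d" for a b
        using psd_zero_diag[OF N\<tau>p idx[OF j that(1)] idx[OF j that(2)] dz[OF that(1)]] by simp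
      define Ej where "Ej = (1 / (1 + complex_of_real 0)) \<cdot>\<^sub>m (\<sigma> j + complex_of_real 0 \<cdot>\<^sub>m \<sigma> j)"
      have Ejc: "Ej \<in> carrier_mat d d" using \<sigma>car by (simp add: Ej_def)
      have Ejent: "Ej $$ (a,b) = complex_of_real (real k * (1+s)) * N D $$ (j*d+a, j*d+b)"
        if "a<d" "b<d" for a b
      proof -
        have "Ej $$ (a,b) = \<sigma> j $$ (a,b)" using that \<sigma>car[of j] by (simp add: Ej_def)
        then show ?thesis by (simp add: \<sigma>D[OF j that] Nz[OF that])
      qed
      have trEj: "tr Ej = 1" unfolding Ej_def tr_comb[OF \<sigma>car \<sigma>car] tr\<sigma>[OF j] by simp
      have "incoherent d Ej"
        by (rule incoh_block[OF NDinc blk_inj blk_img[OF j] _ Ejc Ejent trEj]) (use s in auto)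
      then have "robustness d (\<sigma> j) \<le> 0" unfolding Ej_def by (intro R_le[OF _ \<sigma>den[OF j]]) auto
      then show ?thesis using t0 by simp
    qed
    have "(\<Sum>j<k. 1 / real k * robustness d (\<sigma> j)) \<le> (\<Sum>j<k. 1 / real k * (real k * s * t j))"
      by (intro sum_mono mult_left_mono Rj) auto
    also have "\<dots> = s * (\<Sum>j<k. t j)" using kpos by (simp add: sum_distrib_left)
    also have "\<dots> = s" using tsum by simp
    finally show "(\<Sum>j<k. 1 / real k * robustness d (ptrace_B k d (N (proj (\<psi> j))))) \<le> s"
      by (simp add: \<sigma>_def X_def)
  qed
qed

end



lemma sum_list_map_zero: "(\<And>x. x \<in> set xs \<Longrightarrow> f x = (0::'a::monoid_add)) \<Longrightarrow> sum_list (map f xs) = 0"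
  by (induction xs) auto

lemma sum_list_map_upt: "sum_list (map f [0..<n]) = (\<Sum>i<n. f i)"
  by (simp add: interv_sum_list_conv_sum_set_nat atLeast0LessThan)

lemma channel_density_gen: assumes ch: "channel m n N" and \<rho>: "density m \<rho>" shows "density n (N \<rho>)"
proof -
  from channel_facts_ex[OF ch] obtain r :: nat and \<kappa> :: "nat \<Rightarrow> complex mat" where H:
    "(\<forall>\<rho>\<in>carrier_mat m m. N \<rho> \<in> carrier_mat n n) \<and>
    (\<forall>\<rho>\<in>carrier_mat m m. \<forall>x<n. \<forall>y<n. N \<rho> $$ (x,y) =
        (\<Sum>i<r. \<Sum>a<m. \<Sum>b<m. \<kappa> i $$ (x,a) * \<rho>$$(a,b) * cnj (\<kappa> i $$ (y,b)))) \<and>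
    (\<forall>a<m. \<forall>b<m. (\<Sum>i<r. \<Sum>x<n. cnj (\<kappa> i $$ (x,a)) * \<kappa> i $$ (x,b)) = (if a = b then 1 else 0))"
    by blast
  interpret K: kraus m n r N \<kappa> by unfold_locales (use H in auto)
  show ?thesis by (rule K.ch_density[OF \<rho>])
qed

context ens begin

definition Kj where "Kj j = mat (k*d) d (\<lambda>(x,a). if x = j*d then cnj (\<psi> j $ a) else 0)"
definition Lc where "Lc c = mat (k*d) d (\<lambda>(x,a). if x = 0 then Qf c a else 0)"
definition Ks where "Ks = map Kj [0..<k] @ map Lc [0..<d]"
definition Nc where "Nc = kraus_map (k*d) Ks"

lemma kdpos: "0 < k*d" using kpos dpos by simp

lemma Ks_car: "\<forall>K\<in>set Ks. K \<in> carrier_mat (k*d) d"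
  by (auto simp: Ks_def Kj_def Lc_def)

lemma Ks_row: "K \<in> set Ks \<Longrightarrow> \<exists>x0. \<forall>x<k*d. \<forall>a<d. x \<noteq> x0 \<longrightarrow> K $$ (x,a) = 0"
  by (auto simp: Ks_def Kj_def Lc_def)

lemma Ks_sum: "(\<Sum>K\<leftarrow>Ks. f K) = (\<Sum>j<k. f (Kj j)) + (\<Sum>c<d. f (Lc c))"
  by (simp add: Ks_def sum_list_map_upt comp_def)

lemma Kj_ent: "x<k*d \<Longrightarrow> a<d \<Longrightarrow> Kj j $$ (x,a) = (if x = j*d then cnj (\<psi> j $ a) else 0)"
  by (simp add: Kj_def)

lemma Lc_ent: "x<k*d \<Longrightarrow> a<d \<Longrightarrow> Lc c $$ (x,a) = (if x = 0 then Qf c a else 0)"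
  by (simp add: Lc_def)

lemma Nc_channel: "channel d (k*d) Nc"
  unfolding channel_def
proof (intro exI conjI)
  show "Ks \<noteq> []" using kpos by (simp add: Ks_def)
  show "\<forall>K\<in>set Ks. K \<in> carrier_mat (k*d) d" by (rule Ks_car)
  show "\<forall>\<rho>\<in>carrier_mat d d. Nc \<rho> = kraus_map (k*d) Ks \<rho>" by (simp add: Nc_def)
  note F = adjfold_entry[OF Ks_car]
  show "foldr (\<lambda>K acc. adj K * K + acc) Ks (0\<^sub>m d d) = 1\<^sub>m d"
  proof (rule eq_matI)
    fix a b assume ab: "a < dim_row (1\<^sub>m d :: complex mat)" "b < dim_col (1\<^sub>m d :: complex mat)"
    hence ab': "a<d" "b<d" by auto
    have e1: "(\<Sum>x<k*d. cnj (Kj j $$ (x,a)) * Kj j $$ (x,b)) = \<psi> j $ a * cnj (\<psi> j $ b)" if j: "j<k" for j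
    proof -
      have "(\<Sum>x<k*d. cnj (Kj j $$ (x,a)) * Kj j $$ (x,b)) = (\<Sum>x<k*d. if x = j*d then \<psi> j $ a * cnj (\<psi> j $ b) else 0)"
        using ab' by (intro sum.cong) (auto simp: Kj_ent)
      also have "\<dots> = \<psi> j $ a * cnj (\<psi> j $ b)" using idx[OF j dpos] by simp
      finally show ?thesis .
    qed
    have e2: "(\<Sum>x<k*d. cnj (Lc c $$ (x,a)) * Lc c $$ (x,b)) = cnj (Qf c a) * Qf c b" for c
    proof -
      have "(\<Sum>x<k*d. cnj (Lc c $$ (x,a)) * Lc c $$ (x,b)) = (\<Sum>x<k*d. if x = 0 then cnj (Qf c a) * Qf c b else 0)"
        using ab' by (intro sum.cong) (auto simp: Lc_ent)
      also have "\<dots> = cnj (Qf c a) * Qf c b" using kdpos by simp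
      finally show ?thesis .
    qed
    have "foldr (\<lambda>K acc. adj K * K + acc) Ks (0\<^sub>m d d) $$ (a,b) =
       (\<Sum>j<k. \<Sum>x<k*d. cnj (Kj j $$ (x,a)) * Kj j $$ (x,b)) + (\<Sum>c<d. \<Sum>x<k*d. cnj (Lc c $$ (x,a)) * Lc c $$ (x,b))"
      using F ab' by (simp add: Ks_sum)
    also have "\<dots> = Pf a b + (\<Sum>c<d. cnj (Qf c a) * Qf c b)"
      by (simp add: e1 e2 Pf_def)
    also have "\<dots> = 1\<^sub>m d $$ (a,b)" using ab' by (subst QQ[OF ab']) (simp add: Qf_def)
    finally show "foldr (\<lambda>K acc. adj K * K + acc) Ks (0\<^sub>m d d) $$ (a,b) = 1\<^sub>m d $$ (a,b)" .
  qed (use F in auto)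
qed

lemma Nc_car: "\<rho> \<in> carrier_mat d d \<Longrightarrow> Nc \<rho> \<in> carrier_mat (k*d) (k*d)"
  using kraus_entry[OF Ks_car] by (simp add: Nc_def)

lemma Nc_offdiag: assumes \<rho>: "\<rho> \<in> carrier_mat d d" and xy: "x<k*d" "y<k*d" "x \<noteq> y"
  shows "Nc \<rho> $$ (x,y) = 0"
proof -
  have "Nc \<rho> $$ (x,y) = (\<Sum>K\<leftarrow>Ks. \<Sum>a<d. \<Sum>b<d. K$$(x,a) * \<rho>$$(a,b) * cnj (K$$(y,b)))"
    using kraus_entry[OF Ks_car \<rho>] xy by (simp add: Nc_def)
  also have "\<dots> = 0"
  proof (rule sum_list_map_zero)
    fix K assume K: "K \<in> set Ks"
    obtain x0 where x0: "\<forall>x<k*d. \<forall>a<d. x \<noteq> x0 \<longrightarrow> K $$ (x,a) = 0" using Ks_row[OF K] by blast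
    show "(\<Sum>a<d. \<Sum>b<d. K$$(x,a) * \<rho>$$(a,b) * cnj (K$$(y,b))) = 0"
    proof (cases "x = x0")
      case True
      then have "y \<noteq> x0" using xy by simp
      then show ?thesis using x0 xy by simp
    next
      case False
      then show ?thesis using x0 xy by simp
    qed
  qed
  finally show ?thesis .
qed

lemma Nc_MIO: "MIO d (k*d) Nc"
  unfolding MIO_def
proof (intro conjI Nc_channel allI impI)
  fix \<rho> assume inc: "incoherent d \<rho>"
  have den: "density d \<rho>" and \<rho>c: "\<rho> \<in> carrier_mat d d"
    using inc by (auto simp: incoherent_def density_def psd_def)
  show "incoherent (k*d) (Nc \<rho>)"
    using channel_density_gen[OF Nc_channel den] Nc_offdiag[OF \<rho>c] by (auto simp: incoherent_def)
qed

lemma Nc_diag: assumes j: "j<k" and a: "a<d"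
  shows "Nc (proj (\<psi> j)) $$ (j*d+a, j*d+a) = (if a = 0 then 1 else 0)"
proof -
  let ?x = "j*d+a"
  have x: "?x < k*d" by (rule idx[OF j a])
  define f where "f K = (\<Sum>a'<d. \<Sum>b<d. K$$(?x,a') * proj (\<psi> j) $$(a',b) * cnj (K$$(?x,b)))" for K
  have "Nc (proj (\<psi> j)) $$ (?x, ?x) = (\<Sum>K\<leftarrow>Ks. f K)"
    using kraus_entry[OF Ks_car proj_car[OF j]] x by (simp add: Nc_def f_def)
  also have "\<dots> = (\<Sum>i<k. f (Kj i)) + (\<Sum>c<d. f (Lc c))" by (rule Ks_sum)
  also have "(\<Sum>c<d. f (Lc c)) = 0"
  proof (intro sum.neutral ballI)
    fix c assume c: "c \<in> {..<d}"
    have feq: "f (Lc c) = (if ?x = 0 then (\<Sum>a'<d. Qf c a' * \<psi> j $ a') * cnj (\<Sum>b<d. Qf c b * \<psi> j $ b) else 0)"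
      unfolding f_def using x
      by (auto simp: Lc_ent proj_ent[OF j] sum_product cnj_sum mult_ac intro!: sum.cong)
    have z: "(\<Sum>a'<d. Qf c a' * \<psi> j $ a') = 0" using Qpsi[OF j] c by simp
    show "f (Lc c) = 0" unfolding feq z by simp
  qed
  also have "(\<Sum>i<k. f (Kj i)) = (\<Sum>i<k. if i = j \<and> a = 0 then 1 else 0)"
  proof (intro sum.cong refl)
    fix i assume i: "i \<in> {..<k}"
    have "f (Kj i) = (if ?x = i*d then (\<Sum>a'<d. \<Sum>b<d. (cnj (\<psi> i $ a') * \<psi> j $ a') * (cnj (\<psi> j $ b) * \<psi> i $ b)) else 0)"
      unfolding f_def using x
      by (auto simp: Kj_ent proj_ent[OF j] mult_ac intro!: sum.cong)
    also have "\<dots> = (if ?x = i*d then (\<Sum>a'<d. cnj (\<psi> i $ a') * \<psi> j $ a') * (\<Sum>b<d. cnj (\<psi> j $ b) * \<psi> i $ b) else 0)"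
      by (simp add: sum_product)
    also have "\<dots> = (if i = j \<and> a = 0 then 1 else 0)"
    proof (cases "i = j")
      case True
      then show ?thesis using ip[OF j j] i by auto
    next
      case False
      have "?x \<noteq> i*d" using blk_ne[OF a dpos, of j i] False by simp
      then show ?thesis using False by simp
    qed
    finally show "f (Kj i) = (if i = j \<and> a = 0 then 1 else 0)" .
  qed
  also have "(\<Sum>i<k. if i = j \<and> a = 0 then 1 else 0) + 0 = (if a = 0 then (1::complex) else 0)"
    using j by auto
  finally show ?thesis .
qed

lemma Nc_trB: "j<k \<Longrightarrow> tr_proj_B d j (Nc (proj (\<psi> j))) = 1"
  using dpos by (simp add: tr_proj_B_def Nc_diag)

lemma ptrace_incoh: assumes X: "density (k*d) X" and off: "\<And>x y. x<k*d \<Longrightarrow> y<k*d \<Longrightarrow> x \<noteq> y \<Longrightarrow> X$$(x,y) = 0"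
  shows "incoherent d (ptrace_B k d X)"
proof -
  have Xp: "psd (k*d) X" and Xc: "X \<in> carrier_mat (k*d) (k*d)" and tX: "tr X = 1"
    using X by (auto simp: density_def psd_def)
  let ?P = "ptrace_B k d X"
  have Pc: "?P \<in> carrier_mat d d" by (simp add: ptrace_B_def)
  have off': "?P $$ (a,b) = 0" if "a<d" "b<d" "a \<noteq> b" for a b
    using that off idx by (simp add: ptrace_B_def)
  have "psd d ?P"
  proof (rule psd_diagonal[OF Pc off'])
    fix a assume a: "a<d"
    show "0 \<le> ?P $$ (a,a)" using a psd_diag[OF Xp] idx by (auto simp: ptrace_B_def intro!: sum_nonneg)
  qed
  moreover have "tr ?P = 1"
  proof -
    have "tr ?P = (\<Sum>a<d. \<Sum>i<k. X $$ (i*d+a, i*d+a))" by (simp add: tr_def ptrace_B_def)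
    also have "\<dots> = (\<Sum>i<k. \<Sum>a<d. X $$ (i*d+a, i*d+a))" by (rule sum.swap)
    also have "\<dots> = tr X" unfolding tr_eq_sum[OF Xc] sum_blocks ..
    finally show ?thesis using tX by simp
  qed
  moreover have "\<forall>i<d. \<forall>j<d. i \<noteq> j \<longrightarrow> ?P $$ (i,j) = 0" using off' by blast
  ultimately show ?thesis by (simp add: incoherent_def density_def)
qed

lemma eta_elem: "(0::real) \<in> {(\<Sum>j<k. 1 / real k * robustness d (ptrace_B k d (N (proj (\<psi> j))))) | N.
       MIO d (k*d) N \<and>
       (\<Sum>j<k. 1 / real k * Re (tr_proj_B d j (N (proj (\<psi> j))))) = P_suc k d (\<lambda>_. 1 / real k) (\<lambda>i. proj (\<psi> i))}"
proof -
  have R0: "robustness d (ptrace_B k d (Nc (proj (\<psi> j)))) = 0" if j: "j<k" for j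
    by (rule R_incoherent, rule ptrace_incoh)
       (use channel_density_gen[OF Nc_channel proj_density[OF j]] Nc_offdiag[OF proj_car[OF j]] in auto)
  have "(\<Sum>j<k. 1 / real k * Re (tr_proj_B d j (Nc (proj (\<psi> j))))) = 1"
    using kpos by (simp add: Nc_trB)
  then show ?thesis using Nc_MIO R0 Psuc
    by (intro CollectI exI[of _ Nc]) auto
qed

end



lemma smult_mv: "A \<in> carrier_mat n n \<Longrightarrow> v \<in> carrier_vec n \<Longrightarrow> (c \<cdot>\<^sub>m A) *\<^sub>v v = c \<cdot>\<^sub>v (A *\<^sub>v v)"
  by (intro eq_vecI) (auto simp: scalar_prod_def sum_distrib_left mult.assoc)

lemma entropy_list:
  fixes g :: "complex \<Rightarrow> real"
  assumes "\<forall>e\<in>set es. e = 0 \<or> e = c" "g 0 = 0"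
  shows "sum_list es = of_nat (length (filter (\<lambda>e. e = c) es)) * c \<and>
         sum_list (map g es) = real (length (filter (\<lambda>e. e = c) es)) * g c"
  using assms by (induction es) (auto simp: algebra_simps)

context ens begin

lemma trP: "(\<Sum>a<d. Pf a a) = of_nat k"
proof -
  have "(\<Sum>a<d. Pf a a) = (\<Sum>j<k. \<Sum>a<d. cnj (\<psi> j $ a) * \<psi> j $ a)"
    unfolding Pf_def by (subst sum.swap) (simp add: mult.commute)
  also have "\<dots> = of_nat k" by (simp add: ip)
  finally show ?thesis .
qed

lemma omega_sq: "\<omega> * \<omega> = complex_of_real (1 / real k) \<cdot>\<^sub>m \<omega>"
proof (rule eq_matI)
  fix a b assume ab: "a < dim_row (complex_of_real (1 / real k) \<cdot>\<^sub>m \<omega>)" "b < dim_col (complex_of_real (1 / real k) \<cdot>\<^sub>m \<omega>)"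
  hence ab': "a<d" "b<d" using omega_car by auto
  let ?c = "complex_of_real (1 / real k)"
  have "(\<omega> * \<omega>) $$ (a,b) = (\<Sum>c<d. \<omega> $$ (a,c) * \<omega> $$ (c,b))"
    using omega_car ab' by (simp add: scalar_prod_def atLeast0LessThan)
  also have "\<dots> = (\<Sum>c<d. (?c * Pf a c) * (?c * Pf c b))"
    using ab' by (intro sum.cong refl) (simp add: omega_ent)
  also have "\<dots> = ?c * ?c * (\<Sum>c<d. Pf a c * Pf c b)" by (simp add: sum_distrib_left mult_ac)
  also have "\<dots> = ?c * \<omega> $$ (a,b)" using ab' by (simp add: PP omega_ent)
  also have "\<dots> = (?c \<cdot>\<^sub>m \<omega>) $$ (a,b)" using ab' omega_car by simp
  finally show "(\<omega> * \<omega>) $$ (a,b) = (?c \<cdot>\<^sub>m \<omega>) $$ (a,b)" .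
qed (use omega_car in auto)

lemma eig_vals: assumes ch: "char_poly \<omega> = (\<Prod>a\<leftarrow>es. [:- a, 1:])" and e: "e \<in> set es"
  shows "e = 0 \<or> e = complex_of_real (1 / real k)"
proof -
  let ?c = "complex_of_real (1 / real k)"
  have "poly (char_poly \<omega>) e = 0" unfolding ch by (rule linear_poly_root[OF e])
  hence "eigenvalue \<omega> e" using eigenvalue_root_char_poly[OF omega_car] by simp
  then obtain v where v: "v \<in> carrier_vec d" "v \<noteq> 0\<^sub>v d" "\<omega> *\<^sub>v v = e \<cdot>\<^sub>v v"
    unfolding eigenvalue_def eigenvector_def using omega_car by auto
  have "(\<omega> * \<omega>) *\<^sub>v v = \<omega> *\<^sub>v (\<omega> *\<^sub>v v)" by (rule assoc_mult_mat_vec[OF omega_car omega_car v(1)])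
  also have "\<dots> = e \<cdot>\<^sub>v (e \<cdot>\<^sub>v v)" unfolding v(3) using mult_mat_vec[OF omega_car v(1)] v(3) by simp
  finally have l: "(\<omega> * \<omega>) *\<^sub>v v = e \<cdot>\<^sub>v (e \<cdot>\<^sub>v v)" .
  have r: "(\<omega> * \<omega>) *\<^sub>v v = ?c \<cdot>\<^sub>v (e \<cdot>\<^sub>v v)"
    unfolding omega_sq smult_mv[OF omega_car v(1)] v(3) ..
  obtain i where i: "i<d" "v $ i \<noteq> 0"
  proof (rule ccontr)
    assume "\<not> thesis"
    hence "\<forall>i<d. v $ i = 0" using that by blast
    hence "v = 0\<^sub>v d" using v(1) by (intro eq_vecI) auto
    then show False using v(2) by simp
  qed
  have "e * (e * v $ i) = ?c * (e * v $ i)"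
    using arg_cong[OF l[symmetric, unfolded r], of "\<lambda>w. w $ i"] i v(1) by simp
  hence "(e - ?c) * e * v $ i = 0" by (simp add: algebra_simps)
  then show ?thesis using i by auto
qed

lemma tr_omega: "tr \<omega> = 1"
proof -
  have "tr \<omega> = (\<Sum>a<d. complex_of_real (1 / real k) * Pf a a)"
    using omega_car by (simp add: tr_def omega_ent)
  also have "\<dots> = complex_of_real (1 / real k) * of_nat k" by (simp only: sum_distrib_left[symmetric] trP)
  also have "\<dots> = 1" using kpos by simp
  finally show ?thesis .
qed

lemma sum_es: assumes ch: "char_poly \<omega> = (\<Prod>a\<leftarrow>es. [:- a, 1:])" shows "sum_list es = 1"
proof -
  obtain B P Q where sd: "schur_decomposition \<omega> es = (B,P,Q)" by (cases "schur_decomposition \<omega> es") auto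
  from schur_decomposition[OF omega_car ch sd]
  have sim: "similar_mat_wit \<omega> B P Q" and dg: "diag_mat B = es" by auto
  have dr: "dim_row \<omega> = d" using omega_car by simp
  from sim have Bc: "B \<in> carrier_mat d d" and Pc: "P \<in> carrier_mat d d" and Qc: "Q \<in> carrier_mat d d"
    and QP: "Q * P = 1\<^sub>m d" and eq: "\<omega> = P * B * Q"
    unfolding similar_mat_wit_def Let_def dr by auto
  have "tr \<omega> = tr ((P * B) * Q)" using eq by simp
  also have "\<dots> = tr (Q * (P * B))" by (rule tr_comm) (use Pc Bc Qc in auto)
  also have "Q * (P * B) = (Q * P) * B" using Pc Bc Qc by (simp add: assoc_mult_mat)
  also have "\<dots> = B" using QP Bc by simp
  also have "tr B = sum_list (diag_mat B)"
    using Bc by (simp add: tr_def diag_mat_def sum_list_map_upt)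
  finally show ?thesis using tr_omega dg by simp
qed

lemma entropy: "vN_entropy d \<omega> = log 2 (real k)"
proof -
  let ?c = "complex_of_real (1 / real k)"
  define g where "g a = (if Re a = 0 then 0 else - Re a * log 2 (Re a))" for a :: complex
  define es where "es = eigvals d \<omega>"
  have ch: "char_poly \<omega> = (\<Prod>a\<leftarrow>es. [:- a, 1:])"
    unfolding es_def eigvals_def using someI_ex[OF char_poly_factorized[OF omega_car]] by blast
  have all: "\<forall>e\<in>set es. e = 0 \<or> e = ?c" using eig_vals[OF ch] by blast
  define m where "m = length (filter (\<lambda>e. e = ?c) es)"
  have L: "sum_list es = of_nat m * ?c" and G: "sum_list (map g es) = real m * g ?c"
    using entropy_list[OF all, of g] by (auto simp: g_def m_def)
  have "of_nat m * ?c = 1" using L sum_es[OF ch] by simp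
  hence "Re (of_nat m * ?c) = 1" by simp
  hence "real m * (1 / real k) = 1" by simp
  hence mk: "real m = real k" using kpos by (simp add: field_simps)
  have gc: "g ?c = 1 / real k * log 2 (real k)"
    using kpos by (simp add: g_def log_divide_pos)
  have "vN_entropy d \<omega> = sum_list (map g es)" by (simp add: vN_entropy_def g_def[abs_def] es_def)
  also have "\<dots> = log 2 (real k)" using G mk gc kpos by simp
  finally show ?thesis .
qed

end

theorem propositionS1:
  fixes k d :: nat and \<psi> :: "nat \<Rightarrow> complex vec"
  assumes "0 < k" and "k < d"
    and "\<And>i. i < k \<Longrightarrow> \<psi> i \<in> carrier_vec d"
    and "\<And>i. i < k \<Longrightarrow> map_vec cnj (\<psi> i) \<bullet> \<psi> i = 1"
    and "\<And>i j. i < k \<Longrightarrow> j < k \<Longrightarrow> i \<noteq> j \<Longrightarrow> map_vec cnj (\<psi> i) \<bullet> \<psi> j = 0"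
    and "C_MIO_ens k d (\<lambda>_. 1 / real k) (\<lambda>i. proj (\<psi> i))
           + S_ens k d (\<lambda>_. 1 / real k) (\<lambda>i. proj (\<psi> i)) = log 2 (real d)"
  shows "C_max d (avg_state k d (\<lambda>_. 1 / real k) (\<lambda>i. proj (\<psi> i)))
           + vN_entropy d (avg_state k d (\<lambda>_. 1 / real k) (\<lambda>i. proj (\<psi> i))) = log 2 (real d)"
proof -
  interpret ens k d \<psi> by unfold_locales (use assms(1-5) in auto)
  define E where "E = {(\<Sum>j<k. 1 / real k * robustness d (ptrace_B k d (N (proj (\<psi> j))))) | N.
       MIO d (k*d) N \<and>
       (\<Sum>j<k. 1 / real k * Re (tr_proj_B d j (N (proj (\<psi> j))))) = P_suc k d (\<lambda>_. 1 / real k) (\<lambda>i. proj (\<psi> i))}"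
  define eta where "eta = eta_MIO k d (\<lambda>_. 1 / real k) (\<lambda>i. proj (\<psi> i))"
  have etaE: "eta = Sup E" by (simp add: eta_def eta_MIO_def E_def)
  have E0: "0 \<in> E" using eta_elem unfolding E_def .
  have Eub: "x \<le> robustness d \<omega>" if "x \<in> E" for x
  proof -
    from that obtain N where N: "MIO d (k*d) N"
      "(\<Sum>j<k. 1 / real k * Re (tr_proj_B d j (N (proj (\<psi> j))))) = P_suc k d (\<lambda>_. 1 / real k) (\<lambda>i. proj (\<psi> i))"
      and x: "x = (\<Sum>j<k. 1 / real k * robustness d (ptrace_B k d (N (proj (\<psi> j)))))"
      unfolding E_def by blast
    show ?thesis unfolding x by (rule core[OF N(1)]) (use N(2) Psuc in simp)
  qed
  have eta_le: "eta \<le> robustness d \<omega>" unfolding etaE by (rule cSup_least) (use E0 Eub in auto)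
  have eta_ge: "0 \<le> eta" unfolding etaE by (rule cSup_upper[OF E0]) (use Eub in \<open>auto simp: bdd_above_def\<close>)
  have S: "vN_entropy d \<omega> = log 2 (real k)" by (rule entropy)
  have hyp: "log 2 (1 + eta) + log 2 (real k) = log 2 (real d)"
    using assms(6) S by (simp add: C_MIO_ens_def S_ens_def eta_def)
  have kpos': "0 < real k" and dpos': "0 < real d" using kpos dpos by auto
  have "log 2 (1 + eta) = log 2 (real d / real k)"
    using hyp kpos' dpos' by (simp add: log_divide_pos)
  hence "2 powr log 2 (1 + eta) = 2 powr log 2 (real d / real k)" by simp
  hence e1: "1 + eta = real d / real k" using eta_ge kpos' dpos' by simp
  have "robustness d \<omega> \<le> eta" using R_omega_le e1 by (simp add: s0_def)
  hence R: "robustness d \<omega> = eta" using eta_le by simp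
  show ?thesis using hyp S R by (simp add: C_max_def)
qed


end
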